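(* If $s>0$ is small enough, there exist real numbers $X_n,Y_n,Z_n,W_n$ (depending on $s$) such that $Q_n(1)=1$, $Q_n'(1)=1$, $Q_n(s^\nu)=s^\nu$ and $Q_n'(s^\nu)=1$, and these can be chosen so that $\lim_{s\to0^+}\frac{X_n-1}{s^\nu}=\frac{d_1(d_1-3)(d_n-1)}{(d_1-1)^2d_n}$, $\lim_{s\to0^+}\frac{Y_n}{s^\nu}=\frac{2d_1(d_n-1)}{(d_1-1)d_n}$, $\lim_{s\to0^+}\frac{Z_n-1}{s^\nu}=0$, $\lim_{s\to0^+}\frac{W_n}{s^\nu}=\frac{d_n-1}{d_n}$.
   Context: $n\ge3$ odd, $d_1,\dots,d_n$ positive integers with $\sum1/d_i<1$, $d_{\max}=\max_id_i$, $D_i=d_i+d_{i+1}$, $\tau=\bigl(d_1d_nd_{\max}^{2(d_1-d_n)/d_1}\bigr)^{1/\sum_{i=1}^{n-1}(d_n/d_i)}$, $\nu=\frac{d_n}{d_n-1}\sum_{i=1}^{n-1}\frac1{d_i}$, $b_1=(d_{\max}^2\tau s)^{1/d_1}$, $b_i=(\tau s)^{1/d_i}b_{i-1}$ ($2\le i\le n-1$), and $Q_n(z)=\frac{d_1z^{d_n}}{(d_1-1)X_nz^{d_1}+Y_nz+Z_n}\prod_{i=1}^{n-1}(z^{D_i}-b_i^{D_i})^{(-1)^{i-1}}+W_n$. *)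

theory Defs
  imports "HOL-Analysis.Analysis"
begin

text \<open>Indices run over 1..n; d :: nat => nat gives d_1,...,d_n.\<close>

definition dmax :: "(nat \<Rightarrow> nat) \<Rightarrow> nat \<Rightarrow> nat" where
  "dmax d n = Max (d ` {1..n})"

definition tau :: "(nat \<Rightarrow> nat) \<Rightarrow> nat \<Rightarrow> real" where
  "tau d n = (real (d 1) * real (d n) *
      real (dmax d n) powr (2 * (real (d 1) - real (d n)) / real (d 1)))
      powr (1 / (\<Sum>i=1..n-1. real (d n) / real (d i)))"

definition nu :: "(nat \<Rightarrow> nat) \<Rightarrow> nat \<Rightarrow> real" where
  "nu d n = real (d n) / (real (d n) - 1) * (\<Sum>i=1..n-1. 1 / real (d i))"

text \<open>bval d n s i = b_i (for 1 <= i <= n-1); the value at 0 is unused.\<close>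
fun bval :: "(nat \<Rightarrow> nat) \<Rightarrow> nat \<Rightarrow> real \<Rightarrow> nat \<Rightarrow> real" where
  "bval d n s 0 = 0"
| "bval d n s (Suc 0) = (real (dmax d n) ^ 2 * tau d n * s) powr (1 / real (d 1))"
| "bval d n s (Suc (Suc k)) =
     (tau d n * s) powr (1 / real (d (Suc (Suc k)))) * bval d n s (Suc k)"

definition Qn :: "(nat \<Rightarrow> nat) \<Rightarrow> nat \<Rightarrow> real \<Rightarrow> real \<Rightarrow> real \<Rightarrow> real \<Rightarrow> real \<Rightarrow> real \<Rightarrow> real" where
  "Qn d n s X Y Z W z =
     real (d 1) * z ^ d n / ((real (d 1) - 1) * X * z ^ d 1 + Y * z + Z)
     * (\<Prod>i=1..n-1. (z ^ (d i + d (Suc i)) - bval d n s i ^ (d i + d (Suc i)))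
                        powi ((-1) ^ (i - 1)))
     + W"

end

theory Submission
  imports Defs
begin


lemma times_t:
  fixes t f :: "real \<Rightarrow> real"
  assumes t0: "(t \<longlongrightarrow> 0) F" and tne: "eventually (\<lambda>s. t s \<noteq> 0) F"
  assumes "((\<lambda>s. f s / t s) \<longlongrightarrow> L) F"
  shows "(f \<longlongrightarrow> 0) F"
proof -
  have 1: "((\<lambda>s. t s * (f s / t s)) \<longlongrightarrow> 0 * L) F" using tendsto_mult[OF t0 assms(3)] .
  have 2: "eventually (\<lambda>s. t s * (f s / t s) = f s) F"
    using tne by eventually_elim simp
  show ?thesis using Lim_transform_eventually[OF 1 2] by simp
qed

lemma algC:
  fixes t cn u q g d C :: real
  assumes "t \<noteq> 0" "cn \<noteq> 0" "u \<noteq> 0" "u = 1 + t^2*q" "C = g*(cn+d)/(cn*u)"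
  shows "(((g-1)/t)*(cn+d) + d/t - cn*t*q)/(cn*u) = (C - 1)/t"
proof -
  have "((g-1)/t)*(cn+d) + d/t - cn*t*q = (g*(cn+d) - cn*u)/t"
    using assms(1) unfolding assms(4) by (simp add: field_simps power2_eq_square)
  then have "(((g-1)/t)*(cn+d) + d/t - cn*t*q)/(cn*u) = ((g*(cn+d) - cn*u)/t)/(cn*u)" by simp
  also have "\<dots> = (C - 1)/t" unfolding assms(5) using assms(1-3) by (simp add: field_simps)
  finally show ?thesis .
qed
lemma algCC:
  fixes t cn u q g d xx :: real
  assumes "t \<noteq> 0" "cn \<noteq> 0" "u \<noteq> 0" "cn + d \<noteq> 0" "xx = t * u / (cn + d)"
  shows "(g * t / cn) / xx = g*(cn+d)/(cn*u)"
  unfolding assms(5) using assms(1-4) by (simp add: field_simps)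
lemma algE:
  fixes t cn u q g d xx C :: real
  assumes "t \<noteq> 0" "cn \<noteq> 0" "u \<noteq> 0" "cn + d \<noteq> 0" "xx = t * u / (cn + d)" "u = 1 + t^2*q"
    "C = g*(cn+d)/(cn*u)"
  shows "g * (cn + d)^2 * q / (cn * u^2) = ((g * (cn + d) / cn - C) / xx) / t"
proof -
  have "g * (cn + d) / cn - C = g*(cn+d)*(u - 1)/(cn*u)"
    unfolding assms(7) using assms(2,3) by (simp add: field_simps)
  also have "u - 1 = t^2*q" using assms(6) by simp
  finally have e: "g * (cn + d) / cn - C = g*(cn+d)*(t^2*q)/(cn*u)" .
  show ?thesis unfolding e assms(5) using assms(1-4) by (simp add: field_simps power2_eq_square)
qed

lemma alimX:
  fixes c1 cn w qs e0 :: real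
  assumes "c1 > 1" "cn > 0" "w = 1 - 1/cn" "qs = c1*(2*w + (c1-1)^2*e0)/((c1-1)*cn)"
  shows "((c1*(c1-2)*w - cn*qs + c1*(c1-1)*e0)/c1) / (c1 - 1) = c1*(c1-3)*(cn-1)/((c1-1)^2*cn)"
proof -
  obtain k where k: "c1 = k + 1" "k > 0" using assms(1) by (metis add.commute diff_add_cancel diff_gt_0_iff_gt)
  have h1: "cn * qs = (k+1)*(2*w + k^2*e0)/k" using assms(2,4) k by (simp add: field_simps)
  have "(c1*(c1-2)*w - cn*qs + c1*(c1-1)*e0)/c1 = ((k+1)*(k-1)*w - (k+1)*(2*w + k^2*e0)/k + (k+1)*k*e0)/(k+1)"
    unfolding h1 k(1) by (simp add: algebra_simps)
  also have "(k+1)*(k-1)*w - (k+1)*(2*w + k^2*e0)/k + (k+1)*k*e0 = (k+1)*(((k-1)*w*k - 2*w)/k)"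
    using k(2) by (simp add: field_simps power2_eq_square)
  also have "(k+1)*(((k-1)*w*k - 2*w)/k) / (k+1) = ((k-1)*w*k - 2*w)/k" using k(2) by simp
  finally have h2: "(c1*(c1-2)*w - cn*qs + c1*(c1-1)*e0)/c1 = ((k-1)*w*k - 2*w)/k" .
  have "((k-1)*w*k - 2*w)/k / k = (k+1)*(k-2)*(cn-1)/(k^2*cn)"
    unfolding assms(3) using k(2) assms(2) by (simp add: field_simps power2_eq_square)
  then show ?thesis unfolding h2 using k by simp
qed
lemma alimY:
  fixes c1 cn w qs e0 :: real
  assumes "c1 > 1" "cn > 0" "w = 1 - 1/cn" "qs = c1*(2*w + (c1-1)^2*e0)/((c1-1)*cn)"
  shows "c1*(c1-2)*w - c1*((c1*(c1-2)*w - cn*qs + c1*(c1-1)*e0)/c1) = 2*c1*(cn-1)/((c1-1)*cn)"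
proof -
  have "c1*((c1*(c1-2)*w - cn*qs + c1*(c1-1)*e0)/c1) = c1*(c1-2)*w - cn*qs + c1*(c1-1)*e0"
    using assms(1) by simp
  moreover have "cn*qs = c1*(2*w + (c1-1)^2*e0)/(c1-1)" using assms(1,2,4) by (simp add: field_simps)
  ultimately have "c1*(c1-2)*w - c1*((c1*(c1-2)*w - cn*qs + c1*(c1-1)*e0)/c1)
     = c1*(2*w + (c1-1)^2*e0)/(c1-1) - c1*(c1-1)*e0" by simp
  also have "\<dots> = 2*c1*w/(c1-1)" using assms(1) by (simp add: field_simps power2_eq_square)
  also have "\<dots> = 2*c1*(cn-1)/((c1-1)*cn)" unfolding assms(3) using assms(1,2) by (simp add: field_simps)
  finally show ?thesis .
qed

locale alg =
  fixes d1 dn :: nat and F :: "real filter" and t \<alpha> \<beta> \<gamma> \<delta> :: "real \<Rightarrow> real"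
  assumes d1: "d1 \<ge> 2" and dn: "dn \<ge> 2"
    and t0: "(t \<longlongrightarrow> 0) F" and tpos: "eventually (\<lambda>s. t s > 0) F"
    and ha: "((\<lambda>s. (\<alpha> s - 1)/t s) \<longlongrightarrow> 0) F"
    and hb: "((\<lambda>s. (\<beta> s - (real d1 - real dn))/t s) \<longlongrightarrow> 0) F"
    and hc: "((\<lambda>s. (\<gamma> s - 1)/t s) \<longlongrightarrow> 0) F"
    and hd: "((\<lambda>s. \<delta> s / t s) \<longlongrightarrow> 0) F"
begin

definition "c1 = real d1"
definition "cn = real dn"
definition "w = 1 - 1/cn"
definition "e s = t s ^ (d1 - 1)"
definition "eps0 = (0::real) ^ (d1 - 2)"
definition "xx s q = t s * (1 + (t s)^2 * q) / (cn + \<delta> s)"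
definition "WW s q = t s - xx s q"
definition "pp s q = 1 - WW s q"
definition "N1 s = c1 * \<alpha> s"
definition "N1' s = c1 * \<alpha> s * (cn + \<beta> s)"
definition "Nt s = \<gamma> s * t s / cn"
definition "Nt' s = \<gamma> s * (cn + \<delta> s) / cn"
definition "AA s q = N1 s / pp s q"
definition "BB s q = (N1' s - AA s q) / pp s q"
definition "CC s q = Nt s / xx s q"
definition "EE s q = (Nt' s - CC s q) / xx s q"
definition "aa s q = (BB s q - EE s q) / (c1 * (1 - e s))"
definition "YY s q = BB s q - c1 * aa s q"
definition "ZZ s q = AA s q - aa s q - YY s q"
definition "PH s q = aa s q * t s ^ d1 + YY s q * t s + ZZ s q - CC s q"

lemma c1: "c1 \<ge> 2" using d1 unfolding c1_def by simp
lemma cn: "cn \<ge> 2" using dn unfolding cn_def by simp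

lemma tne: "eventually (\<lambda>s. t s \<noteq> 0) F" using tpos by eventually_elim simp

lemma times_t': "((\<lambda>s. f s / t s) \<longlongrightarrow> L) F \<Longrightarrow> (f \<longlongrightarrow> 0) F"
  using times_t[OF t0 tne] .

lemma lim_basic:
  shows "(\<alpha> \<longlongrightarrow> 1) F" "(\<beta> \<longlongrightarrow> c1 - cn) F" "(\<gamma> \<longlongrightarrow> 1) F" "(\<delta> \<longlongrightarrow> 0) F"
    "(e \<longlongrightarrow> 0) F" "((\<lambda>s. e s / t s) \<longlongrightarrow> eps0) F"
proof -
  have "((\<lambda>s. \<alpha> s - 1) \<longlongrightarrow> 0) F" using times_t'[OF ha] .
  then show "(\<alpha> \<longlongrightarrow> 1) F" by (rule LIM_zero_cancel)
  have "((\<lambda>s. \<beta> s - (real d1 - real dn)) \<longlongrightarrow> 0) F" using times_t'[OF hb] .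
  then show "(\<beta> \<longlongrightarrow> c1 - cn) F" unfolding c1_def cn_def by (rule LIM_zero_cancel)
  have "((\<lambda>s. \<gamma> s - 1) \<longlongrightarrow> 0) F" using times_t'[OF hc] .
  then show "(\<gamma> \<longlongrightarrow> 1) F" by (rule LIM_zero_cancel)
  show "(\<delta> \<longlongrightarrow> 0) F" using times_t'[OF hd] .
  have "((\<lambda>s. t s ^ (d1 - 1)) \<longlongrightarrow> 0 ^ (d1 - 1)) F" by (intro tendsto_power t0)
  moreover have "e = (\<lambda>s. t s ^ (d1 - 1))" by (simp add: fun_eq_iff e_def)
  moreover have "(0::real) ^ (d1 - 1) = 0" using d1 by simp
  ultimately show "(e \<longlongrightarrow> 0) F" by metis
  have "((\<lambda>s. t s ^ (d1 - 2)) \<longlongrightarrow> 0 ^ (d1 - 2)) F" by (intro tendsto_power t0)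
  moreover have "eventually (\<lambda>s. t s ^ (d1 - 2) = e s / t s) F"
    using tne
  proof eventually_elim
    case (elim s)
    have "d1 - 1 = Suc (d1 - 2)" using d1 by simp
    then have "t s ^ (d1 - 1) = t s ^ (d1 - 2) * t s" by simp
    then show ?case unfolding e_def using elim by simp
  qed
  ultimately show "((\<lambda>s. e s / t s) \<longlongrightarrow> eps0) F" unfolding eps0_def
    by (rule Lim_transform_eventually)
qed


definition "alim q0 = (c1*(c1-2)*w - cn*q0 + c1*(c1-1)*eps0)/c1"
definition "ylim q0 = c1*(c1-2)*w - c1*alim q0"
definition "zlim q0 = c1*w - alim q0 - ylim q0"

lemma tr: "(f \<longlongrightarrow> a) F \<Longrightarrow> eventually (\<lambda>s. f s = g s) F \<Longrightarrow> a = b \<Longrightarrow> (g \<longlongrightarrow> b) F"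
  using Lim_transform_eventually[of f a F g] by simp

lemma lims:
  assumes q: "(q \<longlongrightarrow> q0) F"
  shows "((\<lambda>s. WW s (q s) / t s) \<longlongrightarrow> w) F"
   "((\<lambda>s. (AA s (q s) - c1)/t s) \<longlongrightarrow> c1*w) F"
   "((\<lambda>s. (BB s (q s) - c1*(c1-1))/t s) \<longlongrightarrow> c1*(c1-2)*w) F"
   "((\<lambda>s. (CC s (q s) - 1)/t s) \<longlongrightarrow> 0) F"
   "((\<lambda>s. EE s (q s)/t s) \<longlongrightarrow> cn*q0) F"
   "((\<lambda>s. (aa s (q s) - (c1-1))/t s) \<longlongrightarrow> alim q0) F"
   "((\<lambda>s. YY s (q s)/t s) \<longlongrightarrow> ylim q0) F"
   "((\<lambda>s. (ZZ s (q s) - 1)/t s) \<longlongrightarrow> zlim q0) F"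
   "((\<lambda>s. PH s (q s)/t s) \<longlongrightarrow> zlim q0) F"
proof -
  note lb = lim_basic
  have c1p: "c1 > 0" "c1 - 1 \<noteq> 0" using c1 by auto
  have cnp: "cn > 0" using cn by auto
  have ev1: "eventually (\<lambda>s. cn + \<delta> s > 0) F"
    using order_tendstoD(1)[OF tendsto_add[OF tendsto_const[of cn] lb(4)], of 0] cnp by simp
  have tq: "((\<lambda>s. 1 + t s ^ 2 * q s) \<longlongrightarrow> 1 + 0 ^ 2 * q0) F"
    by (intro tendsto_add tendsto_mult tendsto_power tendsto_const t0 q)
  have ev2: "eventually (\<lambda>s. 1 + t s ^ 2 * q s > 0) F"
    using order_tendstoD(1)[OF tq] by simp
  have ev3: "eventually (\<lambda>s. 1 - e s > 0) F"
    using order_tendstoD(1)[OF tendsto_diff[OF tendsto_const lb(5)], of 0 1] by simp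
  have L1a: "((\<lambda>s. 1 - (1 + t s ^ 2 * q s) / (cn + \<delta> s)) \<longlongrightarrow> 1 - (1 + 0 ^ 2 * q0) / (cn + 0)) F"
    using cnp by (intro tendsto_diff tendsto_const tendsto_divide tq tendsto_add lb(4)) auto
  show L1: "((\<lambda>s. WW s (q s) / t s) \<longlongrightarrow> w) F"
  proof (rule tr[OF L1a])
    show "\<forall>\<^sub>F s in F. 1 - (1 + (t s)\<^sup>2 * q s) / (cn + \<delta> s) = WW s (q s) / t s"
      using tne ev1
    proof eventually_elim
      case (elim s)
      then have "cn + \<delta> s \<noteq> 0" by simp
      have "WW s (q s) = t s * (1 - (1 + (t s)\<^sup>2 * q s) / (cn + \<delta> s))"
        unfolding WW_def xx_def by (simp add: algebra_simps)
      with elim show ?case by simp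
    qed
    show "1 - (1 + 0 ^ 2 * q0) / (cn + 0) = w" unfolding w_def by simp
  qed
  have W0: "((\<lambda>s. WW s (q s)) \<longlongrightarrow> 0) F" using times_t'[OF L1] .
  have P1: "((\<lambda>s. pp s (q s)) \<longlongrightarrow> 1) F"
    using tendsto_diff[OF tendsto_const[of 1] W0] unfolding pp_def by simp
  have ev4: "eventually (\<lambda>s. pp s (q s) > 0) F"
    using order_tendstoD(1)[OF P1, of 0] by simp
  have L2a: "((\<lambda>s. c1 * ((\<alpha> s - 1)/t s + WW s (q s)/t s) / pp s (q s)) \<longlongrightarrow> c1 * (0 + w) / 1) F"
    by (intro tendsto_mult tendsto_divide tendsto_add tendsto_const ha L1 P1) simp
  show L2: "((\<lambda>s. (AA s (q s) - c1)/t s) \<longlongrightarrow> c1*w) F"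
  proof (rule tr[OF L2a])
    show "\<forall>\<^sub>F s in F. c1 * ((\<alpha> s - 1)/t s + WW s (q s)/t s) / pp s (q s) = (AA s (q s) - c1)/t s"
      using tne ev4
    proof eventually_elim
      case (elim s)
      then have "pp s (q s) \<noteq> 0" by simp
      with elim show ?case unfolding AA_def N1_def by (simp add: field_simps pp_def)
    qed
  qed simp
  have L3a: "((\<lambda>s. (c1 * (((\<alpha> s - 1)/t s) * (cn + \<beta> s) + (\<beta> s - (real d1 - real dn))/t s)
        - (AA s (q s) - c1)/t s + c1*(c1-1)*(WW s (q s)/t s)) / pp s (q s))
      \<longlongrightarrow> (c1 * (0 * (cn + (c1 - cn)) + 0) - c1*w + c1*(c1-1)*w) / 1) F"
    by (intro tendsto_mult tendsto_divide tendsto_add tendsto_diff tendsto_const ha hb L1 L2 P1 lb(2)) simp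
  show L3: "((\<lambda>s. (BB s (q s) - c1*(c1-1))/t s) \<longlongrightarrow> c1*(c1-2)*w) F"
  proof (rule tr[OF L3a])
    show "\<forall>\<^sub>F s in F. (c1 * (((\<alpha> s - 1)/t s) * (cn + \<beta> s) + (\<beta> s - (real d1 - real dn))/t s)
        - (AA s (q s) - c1)/t s + c1*(c1-1)*(WW s (q s)/t s)) / pp s (q s) = (BB s (q s) - c1*(c1-1))/t s"
      using tne ev4
    proof eventually_elim
      case (elim s)
      then have "pp s (q s) \<noteq> 0" by simp
      with elim show ?case unfolding BB_def N1'_def by (simp add: field_simps pp_def c1_def cn_def)
    qed
    show "(c1 * (0 * (cn + (c1 - cn)) + 0) - c1*w + c1*(c1-1)*w) / 1 = c1*(c1-2)*w"
      by (simp add: algebra_simps)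
  qed
  have L4a: "((\<lambda>s. (((\<gamma> s - 1)/t s) * (cn + \<delta> s) + \<delta> s / t s - cn * t s * q s) / (cn * (1 + t s ^ 2 * q s)))
     \<longlongrightarrow> ((0 * (cn + 0) + 0 - cn * 0 * q0) / (cn * (1 + 0 ^ 2 * q0)))) F"
    using cnp by (intro tendsto_mult tendsto_divide tendsto_add tendsto_diff tendsto_const hc hd lb(4) t0 q tq) auto
  show L4: "((\<lambda>s. (CC s (q s) - 1)/t s) \<longlongrightarrow> 0) F"
  proof (rule tr[OF L4a])
    show "\<forall>\<^sub>F s in F. (((\<gamma> s - 1)/t s) * (cn + \<delta> s) + \<delta> s / t s - cn * t s * q s) / (cn * (1 + t s ^ 2 * q s))
       = (CC s (q s) - 1)/t s"
      using tne ev1 ev2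
    proof eventually_elim
      case (elim s)
      then have n: "cn + \<delta> s \<noteq> 0" "1 + t s ^ 2 * q s \<noteq> 0" "cn \<noteq> 0" using cnp by auto
      define u where "u = 1 + t s ^ 2 * q s"
      have un: "u \<noteq> 0" using n u_def by simp
      have xu: "xx s (q s) = t s * u / (cn + \<delta> s)" unfolding xx_def u_def ..
      have c: "CC s (q s) = \<gamma> s * (cn + \<delta> s) / (cn * u)"
        unfolding CC_def Nt_def using algCC[OF elim(1) n(3) un n(1) xu] .
      show ?case unfolding u_def[symmetric] using algC[OF elim(1) n(3) un u_def c] .
    qed
  qed simp
  have L5a: "((\<lambda>s. \<gamma> s * (cn + \<delta> s)^2 * q s / (cn * (1 + t s ^ 2 * q s)^2))
     \<longlongrightarrow> 1 * (cn + 0)^2 * q0 / (cn * (1 + 0 ^ 2 * q0)^2)) F"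
    using cnp by (intro tendsto_mult tendsto_divide tendsto_add tendsto_power tendsto_const lb(3) lb(4) t0 q) auto
  show L5: "((\<lambda>s. EE s (q s)/t s) \<longlongrightarrow> cn*q0) F"
  proof (rule tr[OF L5a])
    show "\<forall>\<^sub>F s in F. \<gamma> s * (cn + \<delta> s)^2 * q s / (cn * (1 + t s ^ 2 * q s)^2) = EE s (q s)/t s"
      using tne ev1 ev2
    proof eventually_elim
      case (elim s)
      then have n: "cn + \<delta> s \<noteq> 0" "1 + t s ^ 2 * q s \<noteq> 0" "cn \<noteq> 0" using cnp by auto
      define u where "u = 1 + t s ^ 2 * q s"
      have un: "u \<noteq> 0" using n u_def by simp
      have xu: "xx s (q s) = t s * u / (cn + \<delta> s)" unfolding xx_def u_def ..
      have c: "CC s (q s) = \<gamma> s * (cn + \<delta> s) / (cn * u)"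
        unfolding CC_def Nt_def using algCC[OF elim(1) n(3) un n(1) xu] .
      show ?case unfolding u_def[symmetric] EE_def Nt'_def using algE[OF elim(1) n(3) un n(1) xu u_def c] .
    qed
    show "1 * (cn + 0)^2 * q0 / (cn * (1 + 0 ^ 2 * q0)^2) = cn * q0" using cnp by (simp add: power2_eq_square)
  qed
  have L6a: "((\<lambda>s. ((BB s (q s) - c1*(c1-1))/t s - EE s (q s)/t s + c1*(c1-1)*(e s / t s)) / (c1 * (1 - e s)))
     \<longlongrightarrow> (c1*(c1-2)*w - cn*q0 + c1*(c1-1)*eps0) / (c1 * (1 - 0))) F"
    using c1p by (intro tendsto_mult tendsto_divide tendsto_add tendsto_diff tendsto_const L3 L5 lb(5) lb(6)) auto
  show L6: "((\<lambda>s. (aa s (q s) - (c1-1))/t s) \<longlongrightarrow> alim q0) F"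
  proof (rule tr[OF L6a])
    show "\<forall>\<^sub>F s in F. ((BB s (q s) - c1*(c1-1))/t s - EE s (q s)/t s + c1*(c1-1)*(e s / t s)) / (c1 * (1 - e s))
       = (aa s (q s) - (c1-1))/t s"
      using tne ev3
    proof eventually_elim
      case (elim s)
      then have n: "1 - e s \<noteq> 0" "c1 \<noteq> 0" using c1p by auto
      show ?case unfolding aa_def using n elim by (simp add: field_simps)
    qed
    show "(c1*(c1-2)*w - cn*q0 + c1*(c1-1)*eps0) / (c1 * (1 - 0)) = alim q0" unfolding alim_def by simp
  qed
  show L7: "((\<lambda>s. YY s (q s)/t s) \<longlongrightarrow> ylim q0) F"
  proof (rule tr[OF tendsto_diff[OF L3 tendsto_mult[OF tendsto_const[of c1] L6]]])
    show "\<forall>\<^sub>F s in F. (BB s (q s) - c1*(c1-1))/t s - c1 * ((aa s (q s) - (c1-1))/t s) = YY s (q s)/t s"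
      using tne
    proof eventually_elim
      case (elim s)
      show ?case unfolding YY_def using elim by (simp add: field_simps)
    qed
    show "c1*(c1-2)*w - c1 * alim q0 = ylim q0" unfolding ylim_def by simp
  qed
  show L8: "((\<lambda>s. (ZZ s (q s) - 1)/t s) \<longlongrightarrow> zlim q0) F"
  proof (rule tr[OF tendsto_diff[OF tendsto_diff[OF L2 L6] L7]])
    show "\<forall>\<^sub>F s in F. (AA s (q s) - c1)/t s - (aa s (q s) - (c1-1))/t s - YY s (q s)/t s = (ZZ s (q s) - 1)/t s"
      using tne
    proof eventually_elim
      case (elim s)
      show ?case unfolding ZZ_def using elim by (simp add: field_simps)
    qed
    show "c1*w - alim q0 - ylim q0 = zlim q0" unfolding zlim_def by simp
  qed
  have A0: "((\<lambda>s. aa s (q s)) \<longlongrightarrow> c1 - 1) F"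
    using times_t'[OF L6] by (rule LIM_zero_cancel)
  have Y0: "((\<lambda>s. YY s (q s)) \<longlongrightarrow> 0) F" using times_t'[OF L7] .
  have L9a: "((\<lambda>s. aa s (q s) * e s + YY s (q s) + (ZZ s (q s) - 1)/t s - (CC s (q s) - 1)/t s)
     \<longlongrightarrow> (c1 - 1) * 0 + 0 + zlim q0 - 0) F"
    by (intro tendsto_add tendsto_diff tendsto_mult A0 lb(5) Y0 L8 L4)
  show L9: "((\<lambda>s. PH s (q s)/t s) \<longlongrightarrow> zlim q0) F"
  proof (rule tr[OF L9a])
    show "\<forall>\<^sub>F s in F. aa s (q s) * e s + YY s (q s) + (ZZ s (q s) - 1)/t s - (CC s (q s) - 1)/t s = PH s (q s)/t s"
      using tne
    proof eventually_elim
      case (elim s)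
      have "d1 = Suc (d1 - 1)" using d1 by simp
      then have "t s ^ d1 = t s * e s" unfolding e_def by (metis power_Suc)
      then show ?case unfolding PH_def using elim by (simp add: field_simps)
    qed
  qed simp
qed


definition "qs = c1*(2*w + (c1-1)^2*eps0)/((c1-1)*cn)"

lemma zlim_lin: "zlim q = (c1-1)*cn/c1 * (qs - q)"
proof -
  have "c1 \<noteq> 0" "c1 - 1 \<noteq> 0" "cn \<noteq> 0" using c1 cn by auto
  then show ?thesis unfolding zlim_def ylim_def alim_def qs_def
    by (simp add: field_simps power2_eq_square)
qed

definition "good s \<longleftrightarrow> t s > 0 \<and> t s < 1/4 \<and> t s ^ 2 * (\<bar>qs\<bar> + 1) < 1/2 \<and> cn + \<delta> s > 1
   \<and> 1 - e s > 0 \<and> \<alpha> s > 0 \<and> \<gamma> s > 0"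

lemma ev_good: "eventually good F"
proof -
  note lb = lim_basic
  have "((\<lambda>s. t s ^ 2 * (\<bar>qs\<bar> + 1)) \<longlongrightarrow> 0 ^ 2 * (\<bar>qs\<bar> + 1)) F"
    by (intro tendsto_mult tendsto_power tendsto_const t0)
  note h = order_tendstoD(2)[OF this, of "1/2"]
  have 1: "eventually (\<lambda>s. t s ^ 2 * (\<bar>qs\<bar> + 1) < 1/2) F"
    using h by simp
  have 2: "eventually (\<lambda>s. t s < 1/4) F" using order_tendstoD(2)[OF t0, of "1/4"] by simp
  have 3: "eventually (\<lambda>s. cn + \<delta> s > 1) F"
    using order_tendstoD(1)[OF tendsto_add[OF tendsto_const[of cn] lb(4)], of 1] cn by simp
  have 4: "eventually (\<lambda>s. 1 - e s > 0) F"
    using order_tendstoD(1)[OF tendsto_diff[OF tendsto_const lb(5)], of 0 1] by simp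
  have 5: "eventually (\<lambda>s. \<alpha> s > 0) F" using order_tendstoD(1)[OF lb(1)] by simp
  have 6: "eventually (\<lambda>s. \<gamma> s > 0) F" using order_tendstoD(1)[OF lb(3)] by simp
  show ?thesis using tpos 1 2 3 4 5 6 unfolding good_def by eventually_elim (intro conjI)
qed

lemma good_facts:
  assumes "good s" "\<bar>q - qs\<bar> \<le> 1"
  shows "1 + t s ^ 2 * q > 0" "xx s q > 0" "pp s q > 0" "cn + \<delta> s > 0" "1 - e s > 0" "t s > 0"
proof -
  have g: "t s > 0" "t s < 1/4" "t s ^ 2 * (\<bar>qs\<bar> + 1) < 1/2" "cn + \<delta> s > 1" "1 - e s > 0"
    using assms(1) unfolding good_def by auto
  have "\<bar>q\<bar> \<le> \<bar>qs\<bar> + 1" using assms(2) by linarith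
  then have "\<bar>t s ^ 2 * q\<bar> \<le> t s ^ 2 * (\<bar>qs\<bar> + 1)"
    by (simp add: abs_mult mult_left_mono)
  then show a: "1 + t s ^ 2 * q > 0" using g(3) by linarith
  show b: "xx s q > 0" unfolding xx_def using g a by simp
  show "pp s q > 0" unfolding pp_def WW_def using g b by simp
  show "cn + \<delta> s > 0" "1 - e s > 0" "t s > 0" using g by auto
qed

definition "II = {qs - 1 .. qs + 1}"

lemma cont_PH:
  assumes "good s"
  shows "continuous_on II (PH s)"
proof -
  have gx: "\<forall>q\<in>II. xx s q \<noteq> 0" and gp: "\<forall>q\<in>II. pp s q \<noteq> 0"
  proof -
    have *: "q \<in> II \<Longrightarrow> \<bar>q - qs\<bar> \<le> 1" for q unfolding II_def by (simp add: abs_le_iff)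
    show "\<forall>q\<in>II. xx s q \<noteq> 0" using good_facts(2)[OF assms *] by (metis less_irrefl)
    show "\<forall>q\<in>II. pp s q \<noteq> 0" using good_facts(3)[OF assms *] by (metis less_irrefl)
  qed
  have cd: "cn + \<delta> s \<noteq> 0" "c1 * (1 - e s) \<noteq> 0" using good_facts[OF assms, of qs] c1 by auto
  note K = continuous_on_const continuous_on_id
  have x: "continuous_on II (\<lambda>q. xx s q)" unfolding xx_def
    by (rule continuous_on_divide[OF continuous_on_mult'[OF K(1) continuous_on_add[OF K(1)
        continuous_on_mult'[OF K(1) K(2)]]] K(1)]) (use cd in simp)
  have p: "continuous_on II (\<lambda>q. pp s q)" unfolding pp_def WW_def
    by (rule continuous_on_diff[OF K(1) continuous_on_diff[OF K(1) x]])
  have A: "continuous_on II (\<lambda>q. AA s q)" unfolding AA_def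
    by (rule continuous_on_divide[OF K(1) p gp])
  have B: "continuous_on II (\<lambda>q. BB s q)" unfolding BB_def
    by (rule continuous_on_divide[OF continuous_on_diff[OF K(1) A] p gp])
  have C: "continuous_on II (\<lambda>q. CC s q)" unfolding CC_def
    by (rule continuous_on_divide[OF K(1) x gx])
  have E: "continuous_on II (\<lambda>q. EE s q)" unfolding EE_def
    by (rule continuous_on_divide[OF continuous_on_diff[OF K(1) C] x gx])
  have a: "continuous_on II (\<lambda>q. aa s q)" unfolding aa_def
    by (rule continuous_on_divide[OF continuous_on_diff[OF B E] K(1)]) (use cd in simp)
  have Y: "continuous_on II (\<lambda>q. YY s q)" unfolding YY_def
    by (rule continuous_on_diff[OF B continuous_on_mult'[OF K(1) a]])
  have Z: "continuous_on II (\<lambda>q. ZZ s q)" unfolding ZZ_def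
    by (rule continuous_on_diff[OF continuous_on_diff[OF A a] Y])
  have "continuous_on II (\<lambda>q. aa s q * t s ^ d1 + YY s q * t s + ZZ s q - CC s q)"
    by (rule continuous_on_diff[OF continuous_on_add[OF continuous_on_add[OF
       continuous_on_mult'[OF a K(1)] continuous_on_mult'[OF Y K(1)]] Z] C])
  then show ?thesis unfolding PH_def[abs_def] by simp
qed
lemma root_near:
  assumes "0 < r" "r \<le> 1"
  shows "eventually (\<lambda>s. \<exists>x. x \<in> II \<and> \<bar>x - qs\<bar> \<le> r \<and> PH s x = 0) F"
proof -
  have c1p: "c1 - 1 > 0" "c1 > 0" using c1 by auto
  have cnp: "cn > 0" using cn by auto
  have z1: "zlim (qs - r) > 0" unfolding zlim_lin using c1p cnp assms by simp
  have z2: "zlim (qs + r) < 0" unfolding zlim_lin using c1p cnp assms by (simp add: mult_pos_neg)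
  have l1: "((\<lambda>s. PH s (qs - r)/t s) \<longlongrightarrow> zlim (qs - r)) F"
    using lims(9)[OF tendsto_const[of "qs - r"]] by simp
  have l2: "((\<lambda>s. PH s (qs + r)/t s) \<longlongrightarrow> zlim (qs + r)) F"
    using lims(9)[OF tendsto_const[of "qs + r"]] by simp
  have e1: "eventually (\<lambda>s. PH s (qs - r)/t s > 0) F" using order_tendstoD(1)[OF l1 z1] .
  have e2: "eventually (\<lambda>s. PH s (qs + r)/t s < 0) F" using order_tendstoD(2)[OF l2 z2] .
  show ?thesis using e1 e2 ev_good
  proof eventually_elim
    case (elim s)
    have tp: "t s > 0" using elim(3) unfolding good_def by simp
    have a: "PH s (qs - r) \<ge> 0" using elim(1) tp by (simp add: zero_less_divide_iff)
    have b: "PH s (qs + r) \<le> 0" using elim(2) tp by (simp add: divide_less_0_iff)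
    have sub: "{qs - r .. qs + r} \<subseteq> II" unfolding II_def using assms by auto
    have cc: "continuous_on {qs - r .. qs + r} (PH s)"
      using continuous_on_subset[OF cont_PH[OF elim(3)] sub] .
    obtain x where x: "qs - r \<le> x" "x \<le> qs + r" "PH s x = 0"
      using IVT2'[of "PH s" "qs + r" 0 "qs - r", OF b a _ cc] assms by auto
    then have "x \<in> II" "\<bar>x - qs\<bar> \<le> r" using sub by (auto simp: abs_le_iff)
    then show ?case using x by blast
  qed
qed

definition "RR s = {x \<in> II. PH s x = 0}"
definition "xif s = (SOME x. x \<in> RR s \<and> (\<forall>y\<in>RR s. \<bar>x - qs\<bar> \<le> \<bar>y - qs\<bar>))"

lemma xif_spec:
  assumes "good s" "RR s \<noteq> {}"
  shows "xif s \<in> RR s \<and> (\<forall>y\<in>RR s. \<bar>xif s - qs\<bar> \<le> \<bar>y - qs\<bar>)"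
proof -
  have clI: "closed II" unfolding II_def by simp
  have cl: "closed (RR s)" unfolding RR_def
    using continuous_closed_preimage_constant[OF cont_PH[OF assms(1)] clI] by simp
  have "compact (II \<inter> RR s)" unfolding II_def by (rule compact_Int_closed[OF compact_Icc cl])
  moreover have "II \<inter> RR s = RR s" unfolding RR_def by auto
  ultimately have co: "compact (RR s)" by simp
  have "continuous_on (RR s) (\<lambda>x. \<bar>x - qs\<bar>)" by (intro continuous_intros)
  from continuous_attains_inf[OF co assms(2) this]
  have "\<exists>x. x \<in> RR s \<and> (\<forall>y\<in>RR s. \<bar>x - qs\<bar> \<le> \<bar>y - qs\<bar>)" by blast
  then show ?thesis unfolding xif_def by (rule someI_ex)
qed

lemma xif_ev: "eventually (\<lambda>s. good s \<and> xif s \<in> II \<and> PH s (xif s) = 0) F"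
  using root_near[of 1, simplified] ev_good
proof eventually_elim
  case (elim s)
  then have "RR s \<noteq> {}" unfolding RR_def by blast
  then show ?case using xif_spec[OF elim(2)] elim(2) unfolding RR_def by blast
qed

lemma xif_tendsto: "(xif \<longlongrightarrow> qs) F"
proof (rule tendstoI)
  fix r :: real assume r: "r > 0"
  have r': "0 < min (r/2) 1" "min (r/2) 1 \<le> 1" using r by auto
  show "eventually (\<lambda>s. dist (xif s) qs < r) F"
    using root_near[OF r'] ev_good
  proof eventually_elim
    case (elim s)
    then obtain x where x: "x \<in> RR s" "\<bar>x - qs\<bar> \<le> min (r/2) 1" unfolding RR_def by blast
    then have "RR s \<noteq> {}" by blast
    then have "\<bar>xif s - qs\<bar> \<le> \<bar>x - qs\<bar>" using xif_spec[OF elim(2)] x(1) by blast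
    then show ?case using x(2) r unfolding dist_real_def by linarith
  qed
qed
lemma alg_main:
  "\<exists>X Y Z W :: real \<Rightarrow> real.
    eventually (\<lambda>s.
      (c1 - 1) * X s + Y s + Z s \<noteq> 0 \<and>
      N1 s / ((c1 - 1) * X s + Y s + Z s) + W s = 1 \<and>
      (N1' s * ((c1 - 1) * X s + Y s + Z s) - N1 s * ((c1 - 1) * X s * c1 + Y s))
         / ((c1 - 1) * X s + Y s + Z s)^2 = 1 \<and>
      (c1 - 1) * X s * t s ^ d1 + Y s * t s + Z s \<noteq> 0 \<and>
      Nt s / ((c1 - 1) * X s * t s ^ d1 + Y s * t s + Z s) + W s = t s \<and>
      (Nt' s * ((c1 - 1) * X s * t s ^ d1 + Y s * t s + Z s)
         - Nt s * ((c1 - 1) * X s * (c1 * t s ^ (d1 - 1)) + Y s))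
         / ((c1 - 1) * X s * t s ^ d1 + Y s * t s + Z s)^2 = 1) F
    \<and> ((\<lambda>s. (X s - 1)/t s) \<longlongrightarrow> c1*(c1-3)*(cn-1)/((c1-1)^2*cn)) F
    \<and> ((\<lambda>s. Y s / t s) \<longlongrightarrow> 2*c1*(cn-1)/((c1-1)*cn)) F
    \<and> ((\<lambda>s. (Z s - 1)/t s) \<longlongrightarrow> 0) F
    \<and> ((\<lambda>s. W s / t s) \<longlongrightarrow> (cn-1)/cn) F"
proof -
  have c1p: "c1 - 1 > 0" "c1 > 0" using c1 by auto
  have cnp: "cn > 0" using cn by auto
  define X where "X s = aa s (xif s) / (c1 - 1)" for s
  define Y where "Y s = YY s (xif s)" for s
  define Z where "Z s = ZZ s (xif s)" for s
  define W where "W s = WW s (xif s)" for s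
  note L = lims[OF xif_tendsto]
  have ev: "eventually (\<lambda>s.
      (c1 - 1) * X s + Y s + Z s \<noteq> 0 \<and>
      N1 s / ((c1 - 1) * X s + Y s + Z s) + W s = 1 \<and>
      (N1' s * ((c1 - 1) * X s + Y s + Z s) - N1 s * ((c1 - 1) * X s * c1 + Y s))
         / ((c1 - 1) * X s + Y s + Z s)^2 = 1 \<and>
      (c1 - 1) * X s * t s ^ d1 + Y s * t s + Z s \<noteq> 0 \<and>
      Nt s / ((c1 - 1) * X s * t s ^ d1 + Y s * t s + Z s) + W s = t s \<and>
      (Nt' s * ((c1 - 1) * X s * t s ^ d1 + Y s * t s + Z s)
         - Nt s * ((c1 - 1) * X s * (c1 * t s ^ (d1 - 1)) + Y s))
         / ((c1 - 1) * X s * t s ^ d1 + Y s * t s + Z s)^2 = 1) F"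
    using xif_ev
  proof eventually_elim
    case (elim s)
    define q where "q = xif s"
    have gs: "good s" and qI: "\<bar>q - qs\<bar> \<le> 1" and ph: "PH s q = 0"
      using elim unfolding q_def II_def by (auto simp: abs_le_iff)
    note gf = good_facts[OF gs qI]
    have ap: "\<alpha> s > 0" "\<gamma> s > 0" using gs unfolding good_def by auto
    have aX: "(c1 - 1) * X s = aa s q" unfolding X_def q_def using c1p by simp
    have D1: "(c1 - 1) * X s + Y s + Z s = AA s q"
      unfolding aX Y_def Z_def q_def[symmetric] ZZ_def by simp
    have N1p: "N1 s > 0" unfolding N1_def using ap c1p by simp
    have AAp: "AA s q > 0" unfolding AA_def using N1p gf(3) by simp
    have e1: "N1 s = AA s q * pp s q" unfolding AA_def using gf(3) by simp
    have B: "(c1 - 1) * X s * c1 + Y s = BB s q"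
      unfolding Y_def q_def[symmetric] YY_def using aX by (simp add: algebra_simps)
    have Dt: "(c1 - 1) * X s * t s ^ d1 + Y s * t s + Z s = CC s q"
      using ph unfolding aX Y_def Z_def q_def[symmetric] PH_def by (simp add: algebra_simps)
    have Ntp: "Nt s > 0" unfolding Nt_def using ap gf(6) cnp by simp
    have CCp: "CC s q > 0" unfolding CC_def using Ntp gf(2) by simp
    have e2: "Nt s = CC s q * xx s q" unfolding CC_def using gf(2) by simp
    have E: "(c1 - 1) * X s * (c1 * t s ^ (d1 - 1)) + Y s = EE s q"
    proof -
      have "(c1 - 1) * X s * (c1 * t s ^ (d1 - 1)) + Y s = c1 * aa s q * e s + BB s q - c1 * aa s q"
        unfolding aX Y_def q_def[symmetric] YY_def e_def by (simp add: algebra_simps)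
      also have "\<dots> = BB s q - c1 * (1 - e s) * aa s q" by (simp add: algebra_simps)
      also have "c1 * (1 - e s) * aa s q = BB s q - EE s q"
        unfolding aa_def using gf(5) c1p by simp
      finally show ?thesis by simp
    qed
    have W: "W s = WW s q" unfolding W_def q_def ..
    show ?case
    proof (intro conjI)
      show "(c1 - 1) * X s + Y s + Z s \<noteq> 0" unfolding D1 using AAp by simp
      show "N1 s / ((c1 - 1) * X s + Y s + Z s) + W s = 1"
        unfolding D1 W e1 using AAp by (simp add: pp_def)
      show "(N1' s * ((c1 - 1) * X s + Y s + Z s) - N1 s * ((c1 - 1) * X s * c1 + Y s))
         / ((c1 - 1) * X s + Y s + Z s)^2 = 1"
        unfolding D1 B BB_def e1 using AAp gf(3) by (simp add: field_simps power2_eq_square)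
      show "(c1 - 1) * X s * t s ^ d1 + Y s * t s + Z s \<noteq> 0" unfolding Dt using CCp by simp
      show "Nt s / ((c1 - 1) * X s * t s ^ d1 + Y s * t s + Z s) + W s = t s"
        unfolding Dt W e2 using CCp by (simp add: WW_def)
      show "(Nt' s * ((c1 - 1) * X s * t s ^ d1 + Y s * t s + Z s)
         - Nt s * ((c1 - 1) * X s * (c1 * t s ^ (d1 - 1)) + Y s))
         / ((c1 - 1) * X s * t s ^ d1 + Y s * t s + Z s)^2 = 1"
        unfolding Dt E EE_def e2 using CCp gf(2) by (simp add: field_simps power2_eq_square)
    qed
  qed
  have lX: "((\<lambda>s. (X s - 1)/t s) \<longlongrightarrow> c1*(c1-3)*(cn-1)/((c1-1)^2*cn)) F"
  proof (rule tr[OF tendsto_divide[OF L(6) tendsto_const[of "c1 - 1"]]])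
    show "\<forall>\<^sub>F s in F. (aa s (xif s) - (c1 - 1)) / t s / (c1 - 1) = (X s - 1) / t s"
      using c1p by (intro eventuallyI) (simp add: X_def field_simps)
    show "alim qs / (c1 - 1) = c1 * (c1 - 3) * (cn - 1) / ((c1 - 1)\<^sup>2 * cn)"
      unfolding alim_def using alimX[OF _ cnp w_def qs_def] c1p by simp
  qed (use c1p in simp)
  have lY: "((\<lambda>s. Y s / t s) \<longlongrightarrow> 2*c1*(cn-1)/((c1-1)*cn)) F"
  proof (rule tr[OF L(7)])
    show "\<forall>\<^sub>F s in F. YY s (xif s) / t s = Y s / t s" by (simp add: Y_def)
    show "ylim qs = 2 * c1 * (cn - 1) / ((c1 - 1) * cn)"
      unfolding ylim_def alim_def using alimY[OF _ cnp w_def qs_def] c1p by simp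
  qed
  have lZ: "((\<lambda>s. (Z s - 1)/t s) \<longlongrightarrow> 0) F"
  proof (rule tr[OF L(8)])
    show "\<forall>\<^sub>F s in F. (ZZ s (xif s) - 1) / t s = (Z s - 1) / t s" by (simp add: Z_def)
    show "zlim qs = 0" unfolding zlim_lin by simp
  qed
  have lW: "((\<lambda>s. W s / t s) \<longlongrightarrow> (cn-1)/cn) F"
  proof (rule tr[OF L(1)])
    show "\<forall>\<^sub>F s in F. WW s (xif s) / t s = W s / t s" by (simp add: W_def)
    show "w = (cn - 1) / cn" unfolding w_def using cnp by (simp add: field_simps)
  qed
  show ?thesis using ev lX lY lZ lW by blast
qed
end


lemma DERIV_prod_powi:
  fixes f f' :: "'a \<Rightarrow> real \<Rightarrow> real" and g :: "'a \<Rightarrow> real"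
  assumes "finite I" "\<forall>i\<in>I. (f i has_real_derivative g i) (at z)" "\<forall>i\<in>I. f i z \<noteq> 0"
  shows "((\<lambda>z. \<Prod>i\<in>I. f i z powi k i) has_real_derivative
           (\<Prod>i\<in>I. f i z powi k i) * (\<Sum>i\<in>I. of_int (k i) * g i / f i z)) (at z)"
  using assms
proof (induction I rule: finite_induct)
  case empty
  then show ?case by simp
next
  case (insert a I)
  have d1: "((\<lambda>z. f a z powi k a) has_real_derivative of_int (k a) * f a z powi (k a - 1) * g a) (at z)"
    using insert by (auto intro!: DERIV_power_int)
  have d2: "((\<lambda>z. \<Prod>i\<in>I. f i z powi k i) has_real_derivative
           (\<Prod>i\<in>I. f i z powi k i) * (\<Sum>i\<in>I. of_int (k i) * g i / f i z)) (at z)"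
    using insert by auto
  have fa: "f a z \<noteq> 0" using insert by auto
  have e: "f a z powi (k a - 1) = f a z powi k a / f a z"
    using fa by (simp add: power_int_diff)
  show ?case
    using DERIV_mult[OF d1 d2] insert(1,2) fa
    by (simp add: e field_simps)
qed

lemma prod_asym:
  fixes f :: "'a \<Rightarrow> real \<Rightarrow> real"
  assumes "finite I" "(t \<longlongrightarrow> 0) F" "eventually (\<lambda>s. t s \<noteq> 0) F"
    "\<forall>i\<in>I. ((\<lambda>s. (f i s - 1)/t s) \<longlongrightarrow> 0) F"
  shows "((\<lambda>s. ((\<Prod>i\<in>I. f i s) - 1)/t s) \<longlongrightarrow> 0) F"
  using assms
proof (induction I rule: finite_induct)
  case empty
  then show ?case by simp
next
  case (insert a I)
  have ih: "((\<lambda>s. ((\<Prod>i\<in>I. f i s) - 1)/t s) \<longlongrightarrow> 0) F" using insert by auto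
  have fa: "((\<lambda>s. (f a s - 1)/t s) \<longlongrightarrow> 0) F" using insert by auto
  have p1: "((\<lambda>s. 1 + t s * (((\<Prod>i\<in>I. f i s) - 1)/t s)) \<longlongrightarrow> 1 + 0 * 0) F"
    by (intro tendsto_intros ih insert(4))
  have ev1: "eventually (\<lambda>s. 1 + t s * (((\<Prod>i\<in>I. f i s) - 1)/t s) = (\<Prod>i\<in>I. f i s)) F"
    using insert(5) by eventually_elim simp
  have p2: "((\<lambda>s. (\<Prod>i\<in>I. f i s)) \<longlongrightarrow> 1) F"
    using Lim_transform_eventually[OF p1 ev1] by simp
  have p3: "((\<lambda>s. (f a s - 1)/t s * (\<Prod>i\<in>I. f i s) + ((\<Prod>i\<in>I. f i s) - 1)/t s) \<longlongrightarrow> 0 * 1 + 0) F"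
    by (intro tendsto_intros fa p2 ih)
  have ev2: "eventually (\<lambda>s. (f a s - 1)/t s * (\<Prod>i\<in>I. f i s) + ((\<Prod>i\<in>I. f i s) - 1)/t s
     = ((\<Prod>i\<in>insert a I. f i s) - 1)/t s) F"
  proof (rule eventuallyI)
    fix s
    have "(f a s - 1)/t s * (\<Prod>i\<in>I. f i s) + ((\<Prod>i\<in>I. f i s) - 1)/t s
       = ((f a s - 1) * (\<Prod>i\<in>I. f i s) + ((\<Prod>i\<in>I. f i s) - 1))/t s"
      by (simp add: add_divide_distrib)
    also have "\<dots> = ((\<Prod>i\<in>insert a I. f i s) - 1)/t s"
      using insert(1,2) by (simp add: algebra_simps)
    finally show "(f a s - 1)/t s * (\<Prod>i\<in>I. f i s) + ((\<Prod>i\<in>I. f i s) - 1)/t s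
       = ((\<Prod>i\<in>insert a I. f i s) - 1)/t s" .
  qed
  show ?case
    using Lim_transform_eventually[OF p3 ev2] by simp
qed

lemma exp_ln_to0:
  assumes "k > 0"
  shows "((\<lambda>s. exp (c + k * ln s)) \<longlongrightarrow> 0) (at_right (0::real))"
proof -
  have "filterlim (\<lambda>s. k * ln s) at_bot (at_right (0::real))"
    by (rule filterlim_tendsto_pos_mult_at_bot[OF tendsto_const assms ln_at_0])
  then have "filterlim (\<lambda>s. c + k * ln s) at_bot (at_right (0::real))"
    using filterlim_tendsto_add_at_bot_iff[OF tendsto_const[of c], of "\<lambda>s. k * ln s" "at_right 0"] by simp
  from filterlim_compose[OF exp_at_bot this] show ?thesis by simp
qed

lemma factor_asym:
  fixes r t :: "real \<Rightarrow> real"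
  assumes "(t \<longlongrightarrow> 0) F" "((\<lambda>s. r s / t s) \<longlongrightarrow> 0) F" "eventually (\<lambda>s. t s \<noteq> 0) F"
    "k = 1 \<or> k = -1"
  shows "((\<lambda>s. ((1 - r s) powi k - 1)/t s) \<longlongrightarrow> 0) F"
proof -
  have r0: "(r \<longlongrightarrow> 0) F"
  proof -
    have 1: "((\<lambda>s. t s * (r s / t s)) \<longlongrightarrow> 0) F" using tendsto_mult[OF assms(1,2)] by simp
    have 2: "eventually (\<lambda>s. t s * (r s / t s) = r s) F"
      using assms(3) by eventually_elim simp
    show ?thesis using Lim_transform_eventually[OF 1 2] .
  qed
  show ?thesis using assms(4)
  proof
    assume k: "k = 1"
    have 1: "((\<lambda>s. - (r s / t s)) \<longlongrightarrow> - 0) F" by (rule tendsto_minus[OF assms(2)])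
    have 2: "eventually (\<lambda>s. - (r s / t s) = ((1 - r s) powi k - 1)/t s) F"
      using k by (intro eventuallyI) (simp add: field_simps)
    show ?thesis using Lim_transform_eventually[OF 1 2] by simp
  next
    assume k: "k = -1"
    have 1: "((\<lambda>s. (r s / t s) / (1 - r s)) \<longlongrightarrow> 0 / (1 - 0)) F"
      by (intro tendsto_divide tendsto_diff tendsto_const assms(2) r0) simp
    have 2: "eventually (\<lambda>s. (r s / t s) / (1 - r s) = ((1 - r s) powi k - 1)/t s) F"
      using assms(3) order_tendstoD(2)[OF r0 zero_less_one]
    proof eventually_elim
      case (elim s)
      then have n: "1 - r s \<noteq> 0" by simp
      have "(1 - r s) powi k = 1 / (1 - r s)" using k by (simp add: power_int_minus divide_inverse)
      moreover have "(r s/t s)/(1 - r s) = (1/(1-r s) - 1)/t s"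
        using n elim(1) by (simp add: field_simps)
      ultimately show ?case by simp
    qed
    show ?thesis using Lim_transform_eventually[OF 1 2] by simp
  qed
qed



locale stp =
  fixes n :: nat and d :: "nat \<Rightarrow> nat"
  assumes n3: "n \<ge> 3" and nodd: "odd n" and dpos: "\<forall>i\<in>{1..n}. d i > 0"
    and dsum: "(\<Sum>i=1..n. 1 / real (d i)) < 1"
begin

definition "ee i = (\<Sum>j=1..i. 1 / real (d j))"
definition "sig = ee (n - 1)"
definition "nu' = nu d n"
definition "tau' = tau d n"
definition "M = real (dmax d n)"
definition "c0 = 2 * ln M / real (d 1)"

lemma d_ge2: "i \<in> {1..n} \<Longrightarrow> d i \<ge> 2"
proof -
  assume i: "i \<in> {1..n}"
  have "1 / real (d i) \<le> (\<Sum>i=1..n. 1 / real (d i))"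
    by (rule member_le_sum) (use i in auto)
  then have "1 / real (d i) < 1" using dsum by linarith
  moreover have "d i > 0" using dpos i by auto
  ultimately show "d i \<ge> 2" by (cases "d i = 1") auto
qed

lemma d1: "d 1 \<ge> 2" using d_ge2[of 1] n3 by auto
lemma dn: "d n \<ge> 2" using d_ge2[of n] n3 by auto

lemma M_pos: "M > 0"
proof -
  have "d 1 \<in> d ` {1..n}" using n3 by auto
  then have "d 1 \<le> dmax d n" unfolding dmax_def by (intro Max_ge) auto
  then show ?thesis unfolding M_def using d1 by simp
qed

lemma sum_split: "(\<Sum>i=1..n. 1 / real (d i)) = sig + 1 / real (d n)"
proof -
  have "{1..n} = insert n {1..n-1}" using n3 by auto
  moreover have "n \<notin> {1..n-1}" using n3 by auto
  ultimately show ?thesis unfolding sig_def ee_def by (simp add: sum.insert)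
qed

lemma sig_pos: "sig > 0"
proof -
  have "1 / real (d 1) \<le> sig" unfolding sig_def ee_def
    by (rule member_le_sum) (use n3 in auto)
  moreover have "1 / real (d 1) > 0" using d1 by simp
  ultimately show ?thesis by linarith
qed

lemma sig_lt: "sig < 1 - 1 / real (d n)" using dsum sum_split by linarith

lemma nu_eq: "nu' = real (d n) / (real (d n) - 1) * sig"
  unfolding nu'_def nu_def sig_def ee_def ..

lemma nu_pos: "nu' > 0" using nu_eq sig_pos dn by simp

lemma nu_lt1: "nu' < 1"
proof -
  have dn1: "real (d n) - 1 > 0" using dn by simp
  have "real (d n) * sig < real (d n) - 1"
    using sig_lt dn by (simp add: field_simps)
  then show ?thesis unfolding nu_eq using dn1 by (simp add: field_simps)
qed

lemma tau_sum: "(\<Sum>i=1..n-1. real (d n) / real (d i)) = real (d n) * sig"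
  unfolding sig_def ee_def by (simp add: sum_distrib_left)

lemma tau_pos: "tau' > 0"
  unfolding tau'_def tau_def using d1 dn M_pos unfolding M_def by simp

lemma ln_tau: "real (d n) * sig * ln tau' = ln (real (d 1)) + ln (real (d n)) + 2 * (real (d 1) - real (d n)) / real (d 1) * ln M"
proof -
  have p: "real (d 1) * real (d n) * M powr (2 * (real (d 1) - real (d n)) / real (d 1)) > 0"
    using d1 dn M_pos by simp
  have "ln tau' = (1 / (real (d n) * sig)) * ln (real (d 1) * real (d n) * M powr (2 * (real (d 1) - real (d n)) / real (d 1)))"
    unfolding tau'_def tau_def tau_sum M_def[symmetric] using p by (simp add: ln_powr)
  also have "ln (real (d 1) * real (d n) * M powr (2 * (real (d 1) - real (d n)) / real (d 1)))
     = ln (real (d 1)) + ln (real (d n)) + 2 * (real (d 1) - real (d n)) / real (d 1) * ln M"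
    using d1 dn M_pos by (simp add: ln_mult ln_powr)
  finally show ?thesis using sig_pos dn by (simp add: field_simps)
qed

lemma bval_ln:
  assumes "s > 0"
  shows "bval d n s (Suc k) > 0 \<and> ln (bval d n s (Suc k)) = c0 + ee (Suc k) * (ln tau' + ln s)"
proof (induction k)
  case 0
  have p: "M ^ 2 * tau' * s > 0" using M_pos tau_pos assms by simp
  have "bval d n s (Suc 0) = (M ^ 2 * tau' * s) powr (1 / real (d 1))"
    unfolding M_def tau'_def by simp
  moreover have "ln ((M ^ 2 * tau' * s) powr (1 / real (d 1))) = c0 + ee (Suc 0) * (ln tau' + ln s)"
  proof -
    have "ln ((M ^ 2 * tau' * s) powr (1 / real (d 1))) = (2 * ln M + (ln tau' + ln s)) / real (d 1)"
      using p M_pos tau_pos assms by (simp add: ln_powr ln_mult ln_realpow)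
    then show ?thesis unfolding c0_def ee_def by (simp add: add_divide_distrib)
  qed
  ultimately show ?case using p M_pos tau_pos assms by simp
next
  case (Suc k)
  have p: "tau' * s > 0" using tau_pos assms by simp
  have "bval d n s (Suc (Suc k)) = (tau' * s) powr (1 / real (d (Suc (Suc k)))) * bval d n s (Suc k)"
    unfolding tau'_def by simp
  moreover have "ee (Suc (Suc k)) = ee (Suc k) + 1 / real (d (Suc (Suc k)))"
    unfolding ee_def by simp
  ultimately show ?case using Suc p assms tau_pos
    by (simp add: ln_mult ln_powr field_simps)
qed


definition "DD i = d i + d (Suc i)"
definition "tt s = s powr nu'"

lemma ee_Suc: "ee (Suc i) = ee i + 1 / real (d (Suc i))" unfolding ee_def by simp

lemma ee_mono: "i \<le> j \<Longrightarrow> ee i \<le> ee j"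
  unfolding ee_def by (rule sum_mono2) auto

lemma ee_ge: "i \<ge> 1 \<Longrightarrow> ee i \<ge> 1 / real (d i)"
  unfolding ee_def by (rule member_le_sum) auto

lemma ee_nonneg: "ee i \<ge> 0" unfolding ee_def by (rule sum_nonneg) auto

lemma I1:
  assumes "i \<in> {1..n-1}"
  shows "real (DD i) * ee i > nu'"
proof -
  have di: "d i \<ge> 2" "d (Suc i) \<ge> 2" using d_ge2[of i] d_ge2[of "Suc i"] assms by auto
  have "real (d i) * ee i \<ge> real (d i) * (1 / real (d i))"
    using ee_ge[of i] assms di by (intro mult_left_mono) auto
  then have 1: "real (d i) * ee i \<ge> 1" using di by simp
  have 2: "real (d (Suc i)) * ee i > 0" using ee_ge[of i] assms di
    by (intro mult_pos_pos) (auto intro: less_le_trans[of _ "1 / real (d i)"])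
  have "real (DD i) * ee i = real (d i) * ee i + real (d (Suc i)) * ee i"
    unfolding DD_def by (simp add: algebra_simps)
  then show ?thesis using 1 2 nu_lt1 by linarith
qed

lemma I2:
  assumes "i \<in> {1..n-1}"
  shows "real (DD i) * (nu' - ee i) - nu' > 0"
proof -
  have di: "d i \<ge> 2" "d (Suc i) \<ge> 2" using d_ge2[of i] d_ge2[of "Suc i"] assms by auto
  have dn1: "real (d n) - 1 > 0" using dn by simp
  define rho where "rho = nu' - sig"
  have rho: "rho = sig / (real (d n) - 1)" unfolding rho_def nu_eq using dn1 by (simp add: field_simps)
  have rp: "rho > 0" unfolding rho using sig_pos dn1 by simp
  have nur: "nu' = real (d n) * rho" unfolding rho nu_eq by simp
  show ?thesis
  proof (cases "i = n - 1")
    case True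
    then have "ee i = sig" unfolding sig_def by simp
    then have "real (DD i) * (nu' - ee i) = (real (d i) + real (d n)) * rho"
      unfolding DD_def rho_def using True n3 by simp
    then show ?thesis using nur rp di by (simp add: algebra_simps)
  next
    case False
    then have "Suc i \<le> n - 1" using assms by auto
    then have "ee (Suc i) \<le> sig" unfolding sig_def by (rule ee_mono)
    then have "sig - ee i \<ge> 1 / real (d (Suc i))" using ee_Suc[of i] by simp
    then have "real (DD i) * (sig - ee i) \<ge> real (DD i) * (1 / real (d (Suc i)))"
      by (intro mult_left_mono) auto
    moreover have "real (DD i) * (1 / real (d (Suc i))) \<ge> 1"
      using di unfolding DD_def by (simp add: field_simps)
    moreover have "real (DD i) * (nu' - ee i) = real (DD i) * rho + real (DD i) * (sig - ee i)"
      unfolding rho_def by (simp add: algebra_simps)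
    moreover have "real (DD i) * rho > 0" using rp di unfolding DD_def by simp
    ultimately show ?thesis using nu_lt1 by linarith
  qed
qed

lemma b_pos: "s > 0 \<Longrightarrow> i \<ge> 1 \<Longrightarrow> bval d n s i > 0"
  using bval_ln[of s "i - 1"] by simp

lemma b_exp: "s > 0 \<Longrightarrow> i \<ge> 1 \<Longrightarrow> bval d n s i = exp (c0 + ee i * (ln tau' + ln s))"
  using bval_ln[of s "i - 1"] by (metis Suc_diff_1 exp_ln less_le_trans zero_less_one)

lemma tt_exp: "s > 0 \<Longrightarrow> tt s = exp (nu' * ln s)"
  unfolding tt_def powr_def by simp

lemma A1:
  assumes "i \<in> {1..n-1}"
  shows "((\<lambda>s. bval d n s i ^ DD i / tt s) \<longlongrightarrow> 0) (at_right 0)"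
proof -
  define C where "C = real (DD i) * (c0 + ee i * ln tau')"
  define k where "k = real (DD i) * ee i - nu'"
  have k: "k > 0" unfolding k_def using I1[OF assms] by simp
  have "eventually (\<lambda>s. exp (C + k * ln s) = bval d n s i ^ DD i / tt s) (at_right (0::real))"
    unfolding eventually_at_right_field
  proof (intro exI[of _ 1] conjI allI impI)
    fix s :: real assume s: "0 < s" "s < 1"
    have "bval d n s i ^ DD i / tt s = exp (real (DD i) * (c0 + ee i * (ln tau' + ln s))) / exp (nu' * ln s)"
    proof -
      have "bval d n s i = exp (c0 + ee i * (ln tau' + ln s))" "tt s = exp (nu' * ln s)"
        using b_exp[of s i] tt_exp[of s] s assms by auto
      then show ?thesis by (simp add: exp_of_nat_mult)
    qed
    also have "\<dots> = exp (C + k * ln s)" unfolding C_def k_def by (simp add: exp_diff[symmetric] algebra_simps)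
    finally show "exp (C + k * ln s) = bval d n s i ^ DD i / tt s" by simp
  qed simp
  from Lim_transform_eventually[OF exp_ln_to0[OF k, of C] this] show ?thesis .
qed

lemma A2:
  assumes "i \<in> {1..n-1}"
  shows "((\<lambda>s. (tt s / bval d n s i) ^ DD i / tt s) \<longlongrightarrow> 0) (at_right 0)"
proof -
  define C where "C = - real (DD i) * (c0 + ee i * ln tau')"
  define k where "k = real (DD i) * (nu' - ee i) - nu'"
  have k: "k > 0" unfolding k_def using I2[OF assms] by simp
  have "eventually (\<lambda>s. exp (C + k * ln s) = (tt s / bval d n s i) ^ DD i / tt s) (at_right (0::real))"
    unfolding eventually_at_right_field
  proof (intro exI[of _ 1] conjI allI impI)
    fix s :: real assume s: "0 < s" "s < 1"
    have "(tt s / bval d n s i) ^ DD i / tt s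
       = exp (real (DD i) * (nu' * ln s - (c0 + ee i * (ln tau' + ln s)))) / exp (nu' * ln s)"
    proof -
      have "bval d n s i = exp (c0 + ee i * (ln tau' + ln s))" "tt s = exp (nu' * ln s)"
        using b_exp[of s i] tt_exp[of s] s assms by auto
      then show ?thesis by (simp add: exp_of_nat_mult exp_diff[symmetric])
    qed
    also have "\<dots> = exp (C + k * ln s)" unfolding C_def k_def by (simp add: exp_diff[symmetric] algebra_simps)
    finally show "exp (C + k * ln s) = (tt s / bval d n s i) ^ DD i / tt s" by simp
  qed simp
  from Lim_transform_eventually[OF exp_ln_to0[OF k, of C] this] show ?thesis .
qed

definition "kk i = ((-1::int) ^ (i - 1))"
definition "LL s i = c0 + ee i * (ln tau' + ln s)"

lemma kk_cases: "kk i = 1 \<or> kk i = -1" unfolding kk_def by (simp add: minus_one_power_iff)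

lemma kk_real: "real_of_int (kk i) = (-1::real) ^ (i - 1)" unfolding kk_def by simp

lemma tele1: "Suc k \<le> n - 1 \<Longrightarrow>
  (\<Sum>i=1..Suc k. (-1::real) ^ (i - 1) * real (DD i)) = real (d 1) + (-1) ^ k * real (d (Suc (Suc k)))"
proof (induction k)
  case 0
  then show ?case unfolding DD_def by simp
next
  case (Suc k)
  have "(\<Sum>i=1..Suc (Suc k). (-1::real) ^ (i - 1) * real (DD i))
     = (\<Sum>i=1..Suc k. (-1::real) ^ (i - 1) * real (DD i)) + (-1) ^ Suc k * real (DD (Suc (Suc k)))"
    by simp
  also have "\<dots> = real (d 1) + (-1) ^ Suc k * real (d (Suc (Suc (Suc k))))"
    using Suc by (simp add: DD_def algebra_simps)
  finally show ?case .
qed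

lemma tele2:
  assumes "Suc k \<le> n - 1"
  shows "(\<Sum>i=1..Suc k. (-1::real) ^ (i - 1) * real (DD i) * (c0 + ee i * l))
     = real (d 1) * (c0 + ee 1 * l) + l * (if even (Suc k) then -1 else 0)
       + (-1) ^ k * real (d (Suc (Suc k))) * (c0 + ee (Suc k) * l)"
  using assms
proof (induction k)
  case 0
  then show ?case unfolding DD_def by (simp add: algebra_simps)
next
  case (Suc k)
  have "d (Suc (Suc k)) \<ge> 2" using d_ge2[of "Suc (Suc k)"] Suc(2) by simp
  then have dp: "real (d (Suc (Suc k))) > 0" by simp
  have e: "ee (Suc (Suc k)) = ee (Suc k) + 1 / real (d (Suc (Suc k)))" by (rule ee_Suc)
  have "(\<Sum>i=1..Suc (Suc k). (-1::real) ^ (i - 1) * real (DD i) * (c0 + ee i * l))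
     = (\<Sum>i=1..Suc k. (-1::real) ^ (i - 1) * real (DD i) * (c0 + ee i * l))
       + (-1) ^ Suc k * real (DD (Suc (Suc k))) * (c0 + ee (Suc (Suc k)) * l)"
    by simp
  also have "\<dots> = real (d 1) * (c0 + ee 1 * l) + l * (if even (Suc k) then -1 else 0)
       + (-1) ^ k * real (d (Suc (Suc k))) * (c0 + ee (Suc k) * l)
       + (-1) ^ Suc k * real (DD (Suc (Suc k))) * (c0 + ee (Suc (Suc k)) * l)"
    using Suc by simp
  also have "\<dots> = real (d 1) * (c0 + ee 1 * l) + l * (if even (Suc (Suc k)) then -1 else 0)
       + (-1) ^ Suc k * real (d (Suc (Suc (Suc k)))) * (c0 + ee (Suc (Suc k)) * l)"
  proof -
    define x :: real where "x = (-1) ^ k"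
    define D where "D = real (d (Suc (Suc k)))"
    define D' where "D' = real (d (Suc (Suc (Suc k))))"
    define E where "E = ee (Suc k)"
    have aux: "x*D*(c0 + E*l) + (-x)*(D + D')*(c0 + (E + 1/D)*l) = -x*l + (-x)*D'*(c0 + (E + 1/D)*l)"
      using dp unfolding D_def[symmetric] by (simp add: field_simps)
    have f: "l * (if even (Suc k) then -1 else 0) - x * l = l * (if even (Suc (Suc k)) then -1 else 0)"
      unfolding x_def by (cases "even k") auto
    have r1: "(-1::real) ^ Suc k = -x" unfolding x_def by simp
    have r2: "real (DD (Suc (Suc k))) = D + D'" unfolding DD_def D_def D'_def by simp
    have r3: "ee (Suc (Suc k)) = E + 1/D" unfolding e E_def D_def ..
    have r4: "(-1::real) ^ k = x" unfolding x_def ..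
    have r5: "real (d (Suc (Suc k))) = D" "real (d (Suc (Suc (Suc k)))) = D'" "ee (Suc k) = E"
      unfolding D_def D'_def E_def by auto
    show ?thesis unfolding r1 r2 r3 r4 r5 using aux f by linarith
  qed
  finally show ?case .
qed

lemma n_even_m1: "even (n - 1)" using nodd n3 by simp

lemma sumk: "(\<Sum>i=1..n-1. real_of_int (kk i) * real (DD i)) = real (d 1) - real (d n)"
proof -
  obtain k where k: "n - 1 = Suc k" using n3 by (cases "n - 1") auto
  have ok: "odd k" using nodd k n3 by presburger
  have nk: "Suc (Suc k) = n" using k n3 by simp
  show ?thesis unfolding kk_real k using tele1[of k] k ok nk by simp
qed

lemma sumkL:
  "(\<Sum>i=1..n-1. real_of_int (kk i) * real (DD i) * (c0 + ee i * l))
     = (real (d 1) - real (d n)) * c0 - real (d n) * sig * l"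
proof -
  obtain k where k: "n - 1 = Suc k" using n3 by (cases "n - 1") auto
  have ok: "odd k" using nodd k n3 by presburger
  have nk: "Suc (Suc k) = n" using k n3 by simp
  have e1: "real (d 1) * ee 1 = 1" unfolding ee_def using d1 by simp
  have "(\<Sum>i=1..n-1. real_of_int (kk i) * real (DD i) * (c0 + ee i * l))
     = real (d 1) * (c0 + ee 1 * l) + l * (-1) - real (d n) * (c0 + sig * l)"
    unfolding kk_real k using tele2[of k l] k ok nk sig_def by simp
  also have "\<dots> = (real (d 1) - real (d n)) * c0 - real (d n) * sig * l"
    using e1 by (simp add: algebra_simps)
  finally show ?thesis .
qed

lemma LL_b: "s > 0 \<Longrightarrow> i \<ge> 1 \<Longrightarrow> bval d n s i = exp (LL s i)"
  unfolding LL_def by (rule b_exp)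

lemma powi_exp: "k = 1 \<or> k = -1 \<Longrightarrow> exp a powi k = exp (real_of_int k * a)"
  by (auto simp: power_int_minus exp_minus)

lemma neg_powi: "k = 1 \<or> k = -1 \<Longrightarrow> (- y :: real) powi k = - (y powi k)"
  by (auto simp: power_int_minus)

lemma card_even: "(-1::real) ^ card {1..n-1} = 1"
  using n_even_m1 by simp

lemma cst:
  assumes s: "s > 0"
  shows "real (d 1) * real (d n) * tt s ^ (d n - 1) * (\<Prod>i=1..n-1. (- (bval d n s i ^ DD i)) powi kk i) = 1"
proof -
  let ?l = "ln tau' + ln s"
  have 1: "(\<Prod>i=1..n-1. (- (bval d n s i ^ DD i)) powi kk i)
      = (\<Prod>i=1..n-1. - exp (real_of_int (kk i) * real (DD i) * LL s i))"
  proof (rule prod.cong[OF refl])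
    fix i assume i: "i \<in> {1..n-1}"
    have "bval d n s i ^ DD i = exp (real (DD i) * LL s i)"
      using LL_b[OF s, of i] i by (simp add: exp_of_nat_mult)
    then show "(- (bval d n s i ^ DD i)) powi kk i = - exp (real_of_int (kk i) * real (DD i) * LL s i)"
      using neg_powi[OF kk_cases] powi_exp[OF kk_cases] by (simp add: mult.assoc)
  qed
  have 2: "(\<Prod>i=1..n-1. - exp (real_of_int (kk i) * real (DD i) * LL s i))
      = exp (\<Sum>i=1..n-1. real_of_int (kk i) * real (DD i) * LL s i)"
    unfolding prod_uminus card_even by (simp add: exp_sum)
  have 3: "(\<Sum>i=1..n-1. real_of_int (kk i) * real (DD i) * LL s i)
      = (real (d 1) - real (d n)) * c0 - real (d n) * sig * ?l"
    unfolding LL_def by (rule sumkL)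
  have dn1: "real (d n - 1) = real (d n) - 1" using dn by simp
  have 4: "tt s ^ (d n - 1) = exp (real (d n) * sig * ln s)"
  proof -
    have "tt s ^ (d n - 1) = exp (real (d n - 1) * (nu' * ln s))"
      unfolding tt_exp[OF s] by (simp add: exp_of_nat_mult)
    also have "real (d n - 1) * (nu' * ln s) = real (d n) * sig * ln s"
      unfolding dn1 nu_eq using dn by (simp add: field_simps)
    finally show ?thesis .
  qed
  have 5: "real (d 1) * real (d n) = exp (ln (real (d 1)) + ln (real (d n)))"
    using d1 dn by (simp add: exp_add)
  have "real (d 1) * real (d n) * tt s ^ (d n - 1) * (\<Prod>i=1..n-1. (- (bval d n s i ^ DD i)) powi kk i)
     = exp (ln (real (d 1)) + ln (real (d n)) + real (d n) * sig * ln s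
            + ((real (d 1) - real (d n)) * c0 - real (d n) * sig * ?l))"
    unfolding 1 2 3 4 5 by (simp add: exp_add)
  also have "ln (real (d 1)) + ln (real (d n)) + real (d n) * sig * ln s
            + ((real (d 1) - real (d n)) * c0 - real (d n) * sig * ?l) = 0"
  proof -
    have "(real (d 1) - real (d n)) * c0 = 2 * (real (d 1) - real (d n)) / real (d 1) * ln M"
      unfolding c0_def by simp
    then show ?thesis using ln_tau by (simp add: algebra_simps)
  qed
  finally show ?thesis by simp
qed

definition "ff s z i = z ^ DD i - bval d n s i ^ DD i"
definition "PP s z = (\<Prod>i=1..n-1. ff s z i powi kk i)"
definition "SS s z = (\<Sum>i=1..n-1. real_of_int (kk i) * (real (DD i) * z ^ (DD i - 1)) / ff s z i)"

lemma tt0: "(tt \<longlongrightarrow> 0) (at_right 0)"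
proof -
  have "eventually (\<lambda>s. exp (0 + nu' * ln s) = tt s) (at_right (0::real))"
    unfolding eventually_at_right_field by (intro exI[of _ 1]) (auto simp: tt_exp)
  from Lim_transform_eventually[OF exp_ln_to0[OF nu_pos, of 0] this] show ?thesis .
qed

lemma ttpos: "eventually (\<lambda>s. tt s > 0) (at_right 0)"
  unfolding eventually_at_right_field by (intro exI[of _ 1]) (auto simp: tt_def)

lemma ttne: "eventually (\<lambda>s. tt s \<noteq> 0) (at_right 0)"
  using ttpos by eventually_elim simp

lemma spos: "eventually (\<lambda>s. s > 0) (at_right (0::real))"
  by (simp add: eventually_at_right_less)

lemma r0: "i \<in> {1..n-1} \<Longrightarrow> ((\<lambda>s. bval d n s i ^ DD i) \<longlongrightarrow> 0) (at_right 0)"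
  using times_t[OF tt0 ttne A1] by simp

lemma u0: "i \<in> {1..n-1} \<Longrightarrow> ((\<lambda>s. (tt s / bval d n s i) ^ DD i) \<longlongrightarrow> 0) (at_right 0)"
  using times_t[OF tt0 ttne A2] by simp

lemma P1_eq: "PP s 1 = (\<Prod>i=1..n-1. (1 - bval d n s i ^ DD i) powi kk i)"
  unfolding PP_def ff_def by simp

lemma G1: "((\<lambda>s. (PP s 1 - 1) / tt s) \<longlongrightarrow> 0) (at_right 0)"
  unfolding P1_eq
  by (rule prod_asym[OF _ tt0 ttne]) (auto intro!: factor_asym[OF tt0 _ ttne] A1 kk_cases)

lemma DD_ge: "i \<in> {1..n-1} \<Longrightarrow> DD i \<ge> 1"
proof -
  assume "i \<in> {1..n-1}"
  then have "d i \<ge> 2" using d_ge2[of i] by auto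
  then show ?thesis unfolding DD_def by simp
qed

lemma ev_ff1: "eventually (\<lambda>s. \<forall>i\<in>{1..n-1}. bval d n s i ^ DD i < 1) (at_right 0)"
  by (rule eventually_ball_finite) (auto intro: order_tendstoD(2)[OF r0])

lemma ev_fft: "eventually (\<lambda>s. \<forall>i\<in>{1..n-1}. (tt s / bval d n s i) ^ DD i < 1) (at_right 0)"
  by (rule eventually_ball_finite) (auto intro: order_tendstoD(2)[OF u0])

lemma G2: "((\<lambda>s. (SS s 1 - (real (d 1) - real (d n))) / tt s) \<longlongrightarrow> 0) (at_right 0)"
proof -
  have "((\<lambda>s. \<Sum>i=1..n-1. real_of_int (kk i) * real (DD i) * ((bval d n s i ^ DD i / tt s) / (1 - bval d n s i ^ DD i)))
     \<longlongrightarrow> (\<Sum>i=1..n-1. real_of_int (kk i) * real (DD i) * (0 / (1 - 0)))) (at_right 0)"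
    by (intro tendsto_sum tendsto_mult tendsto_const tendsto_divide tendsto_diff A1 r0) auto
  moreover have "eventually (\<lambda>s. (\<Sum>i=1..n-1. real_of_int (kk i) * real (DD i) * ((bval d n s i ^ DD i / tt s) / (1 - bval d n s i ^ DD i)))
     = (SS s 1 - (real (d 1) - real (d n))) / tt s) (at_right 0)"
    using ev_ff1 ttne
  proof eventually_elim
    case (elim s)
    have "SS s 1 - (real (d 1) - real (d n)) = (\<Sum>i=1..n-1. real_of_int (kk i) * real (DD i) / (1 - bval d n s i ^ DD i)) - (\<Sum>i=1..n-1. real_of_int (kk i) * real (DD i))"
      unfolding sumk SS_def ff_def by simp
    also have "\<dots> = (\<Sum>i=1..n-1. real_of_int (kk i) * real (DD i) * (bval d n s i ^ DD i / (1 - bval d n s i ^ DD i)))"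
      unfolding sum_subtractf[symmetric]
    proof (rule sum.cong[OF refl])
      fix i assume i: "i \<in> {1..n-1}"
      from elim(1) i have "bval d n s i ^ DD i < 1" by blast
      then have "1 - bval d n s i ^ DD i \<noteq> 0" by simp
      then show "real_of_int (kk i) * real (DD i) / (1 - bval d n s i ^ DD i) - real_of_int (kk i) * real (DD i)
          = real_of_int (kk i) * real (DD i) * (bval d n s i ^ DD i / (1 - bval d n s i ^ DD i))"
        by (simp add: field_simps)
    qed
    finally show ?case using elim(2) by (simp add: sum_divide_distrib mult.commute)
  qed
  ultimately show ?thesis by (simp add: Lim_transform_eventually)
qed

lemma Pt_eq:
  assumes s: "s > 0"
  shows "real (d 1) * real (d n) * tt s ^ (d n - 1) * PP s (tt s)
    = (\<Prod>i=1..n-1. (1 - (tt s / bval d n s i) ^ DD i) powi kk i)"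
proof -
  have "PP s (tt s) = (\<Prod>i=1..n-1. (- (bval d n s i ^ DD i)) powi kk i * (1 - (tt s / bval d n s i) ^ DD i) powi kk i)"
    unfolding PP_def
  proof (rule prod.cong[OF refl])
    fix i assume i: "i \<in> {1..n-1}"
    have bp: "bval d n s i > 0" using b_pos[OF s] i by simp
    have "ff s (tt s) i = (- (bval d n s i ^ DD i)) * (1 - (tt s / bval d n s i) ^ DD i)"
      unfolding ff_def using bp by (simp add: power_divide field_simps)
    then show "ff s (tt s) i powi kk i = (- (bval d n s i ^ DD i)) powi kk i * (1 - (tt s / bval d n s i) ^ DD i) powi kk i"
      by (simp only: power_int_mult_distrib)
  qed
  then have "PP s (tt s) = (\<Prod>i=1..n-1. (- (bval d n s i ^ DD i)) powi kk i) * (\<Prod>i=1..n-1. (1 - (tt s / bval d n s i) ^ DD i) powi kk i)"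
    by (simp add: prod.distrib)
  then show ?thesis using cst[OF s] by (simp add: mult.assoc[symmetric])
qed

lemma G3: "((\<lambda>s. (real (d 1) * real (d n) * tt s ^ (d n - 1) * PP s (tt s) - 1) / tt s) \<longlongrightarrow> 0) (at_right 0)"
proof -
  have "((\<lambda>s. ((\<Prod>i=1..n-1. (1 - (tt s / bval d n s i) ^ DD i) powi kk i) - 1) / tt s) \<longlongrightarrow> 0) (at_right 0)"
    by (rule prod_asym[OF _ tt0 ttne]) (auto intro!: factor_asym[OF tt0 _ ttne] A2 kk_cases)
  moreover have "eventually (\<lambda>s. ((\<Prod>i=1..n-1. (1 - (tt s / bval d n s i) ^ DD i) powi kk i) - 1) / tt s
     = (real (d 1) * real (d n) * tt s ^ (d n - 1) * PP s (tt s) - 1) / tt s) (at_right 0)"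
    using spos
  proof eventually_elim
    case (elim s)
    show ?case using Pt_eq[OF elim] by simp
  qed
  ultimately show ?thesis by (simp add: Lim_transform_eventually)
qed

lemma G4: "((\<lambda>s. SS s (tt s)) \<longlongrightarrow> 0) (at_right 0)"
proof -
  have "((\<lambda>s. \<Sum>i=1..n-1. real_of_int (kk i) * real (DD i) * (((tt s / bval d n s i) ^ DD i / tt s) / ((tt s / bval d n s i) ^ DD i - 1)))
     \<longlongrightarrow> (\<Sum>i=1..n-1. real_of_int (kk i) * real (DD i) * (0 / (0 - 1)))) (at_right 0)"
    by (intro tendsto_sum tendsto_mult tendsto_const tendsto_divide tendsto_diff A2 u0) auto
  moreover have "eventually (\<lambda>s. (\<Sum>i=1..n-1. real_of_int (kk i) * real (DD i) * (((tt s / bval d n s i) ^ DD i / tt s) / ((tt s / bval d n s i) ^ DD i - 1)))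
     = SS s (tt s)) (at_right 0)"
    using ttpos spos
  proof eventually_elim
    case (elim s)
    show ?case unfolding SS_def
    proof (rule sum.cong[OF refl])
      fix i assume i: "i \<in> {1..n-1}"
      have bp: "bval d n s i > 0" using b_pos[OF elim(2)] i by simp
      obtain m where m: "DD i = Suc m" using DD_ge[of i] i by (cases "DD i") auto
      define b where "b = bval d n s i"
      define t where "t = tt s"
      have "((t / b) ^ Suc m / t) / ((t / b) ^ Suc m - 1) = t ^ m / (t ^ Suc m - b ^ Suc m)"
        using bp elim(1) unfolding b_def[symmetric] t_def[symmetric]
        by (simp add: power_divide field_simps)
      then show "real_of_int (kk i) * real (DD i) * (((tt s / bval d n s i) ^ DD i / tt s) / ((tt s / bval d n s i) ^ DD i - 1))
         = real_of_int (kk i) * (real (DD i) * tt s ^ (DD i - 1)) / ff s (tt s) i"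
        unfolding ff_def m b_def t_def by simp
    qed
  qed
  ultimately show ?thesis by (simp add: Lim_transform_eventually)
qed

lemma DERIV_pow1: "((\<lambda>x. x ^ m) has_real_derivative real m * x ^ (m - 1)) (at x)"
  using DERIV_pow[of m x] by simp

lemma Q_eq: "Qn d n s X Y Z W = (\<lambda>z. real (d 1) * z ^ d n / ((real (d 1) - 1) * X * z ^ d 1 + Y * z + Z) * PP s z + W)"
  by (rule ext) (simp add: Qn_def PP_def ff_def DD_def kk_def)

lemma P_deriv:
  assumes ff: "\<forall>i\<in>{1..n-1}. ff s z i \<noteq> 0"
  shows "(PP s has_real_derivative PP s z * SS s z) (at z)"
proof -
  have d: "\<forall>i\<in>{1..n-1}. ((\<lambda>z. ff s z i) has_real_derivative real (DD i) * z ^ (DD i - 1)) (at z)"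
  proof
    fix i
    have "((\<lambda>z. z ^ DD i - bval d n s i ^ DD i) has_real_derivative real (DD i) * z ^ (DD i - 1) - 0) (at z)"
      by (intro DERIV_diff DERIV_pow1 DERIV_const)
    then show "((\<lambda>z. ff s z i) has_real_derivative real (DD i) * z ^ (DD i - 1)) (at z)"
      unfolding ff_def by simp
  qed
  have "PP s = (\<lambda>z. \<Prod>i=1..n-1. ff s z i powi kk i)" unfolding PP_def[abs_def] ..
  then show ?thesis
    using DERIV_prod_powi[OF _ d ff, of kk] unfolding SS_def by simp
qed

lemma Q_deriv:
  assumes ff: "\<forall>i\<in>{1..n-1}. ff s z i \<noteq> 0"
    and den: "(real (d 1) - 1) * X * z ^ d 1 + Y * z + Z \<noteq> 0"
  shows "(Qn d n s X Y Z W has_real_derivative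
    ((real (d 1) * real (d n) * z ^ (d n - 1) * PP s z + real (d 1) * z ^ d n * (PP s z * SS s z))
       * ((real (d 1) - 1) * X * z ^ d 1 + Y * z + Z)
     - real (d 1) * z ^ d n * PP s z * ((real (d 1) - 1) * X * (real (d 1) * z ^ (d 1 - 1)) + Y))
    / ((real (d 1) - 1) * X * z ^ d 1 + Y * z + Z)^2) (at z)"
proof -
  define Den where "Den z = (real (d 1) - 1) * X * z ^ d 1 + Y * z + Z" for z
  define Den' where "Den' = (real (d 1) - 1) * X * (real (d 1) * z ^ (d 1 - 1)) + Y"
  have dN: "((\<lambda>z. real (d 1) * z ^ d n) has_real_derivative real (d 1) * (real (d n) * z ^ (d n - 1))) (at z)"
    by (intro DERIV_cmult DERIV_pow1)
  have dD: "(Den has_real_derivative Den') (at z)"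
  proof -
    have "((\<lambda>z. (real (d 1) - 1) * X * z ^ d 1 + Y * z + Z) has_real_derivative
        (real (d 1) - 1) * X * (real (d 1) * z ^ (d 1 - 1)) + Y * 1 + 0) (at z)"
      by (intro DERIV_add DERIV_cmult DERIV_pow1 DERIV_ident DERIV_const)
    then show ?thesis unfolding Den_def[abs_def] Den'_def by simp
  qed
  have dq: "((\<lambda>z. real (d 1) * z ^ d n / Den z) has_real_derivative
      (real (d 1) * (real (d n) * z ^ (d n - 1)) * Den z - real (d 1) * z ^ d n * Den') / (Den z * Den z)) (at z)"
    using DERIV_divide[OF dN dD] den unfolding Den_def by simp
  have dQ: "((\<lambda>z. real (d 1) * z ^ d n / Den z * PP s z + W) has_real_derivative
      ((real (d 1) * (real (d n) * z ^ (d n - 1)) * Den z - real (d 1) * z ^ d n * Den') / (Den z * Den z)) * PP s z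
      + (PP s z * SS s z) * (real (d 1) * z ^ d n / Den z) + 0) (at z)"
    by (intro DERIV_add DERIV_mult dq P_deriv[OF ff] DERIV_const)
  have Qe: "Qn d n s X Y Z W = (\<lambda>z. real (d 1) * z ^ d n / Den z * PP s z + W)"
    unfolding Q_eq Den_def ..
  have dz: "Den z \<noteq> 0" using den unfolding Den_def .
  have "((real (d 1) * (real (d n) * z ^ (d n - 1)) * Den z - real (d 1) * z ^ d n * Den') / (Den z * Den z)) * PP s z
      + (PP s z * SS s z) * (real (d 1) * z ^ d n / Den z) + 0
    = ((real (d 1) * real (d n) * z ^ (d n - 1) * PP s z + real (d 1) * z ^ d n * (PP s z * SS s z)) * Den z
       - real (d 1) * z ^ d n * PP s z * Den') / (Den z)^2"
    using dz by (simp add: field_simps power2_eq_square)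
  then show ?thesis using dQ unfolding Qe Den_def[symmetric] Den'_def[symmetric] by simp
qed
end


theorem lemma3p2:
  fixes n :: nat and d :: "nat \<Rightarrow> nat"
  assumes "n \<ge> 3" and "odd n"
    and "\<forall>i\<in>{1..n}. d i > 0"
    and "(\<Sum>i=1..n. 1 / real (d i)) < 1"
  shows "\<exists>s0>0. \<exists>X Y Z W :: real \<Rightarrow> real.
    (\<forall>s. 0 < s \<and> s < s0 \<longrightarrow>
        Qn d n s (X s) (Y s) (Z s) (W s) 1 = 1
      \<and> (Qn d n s (X s) (Y s) (Z s) (W s) has_real_derivative 1) (at 1)
      \<and> Qn d n s (X s) (Y s) (Z s) (W s) (s powr nu d n) = s powr nu d n
      \<and> (Qn d n s (X s) (Y s) (Z s) (W s) has_real_derivative 1) (at (s powr nu d n)))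
    \<and> ((\<lambda>s. (X s - 1) / s powr nu d n) \<longlongrightarrow>
         real (d 1) * (real (d 1) - 3) * (real (d n) - 1) / ((real (d 1) - 1)^2 * real (d n))) (at_right 0)
    \<and> ((\<lambda>s. Y s / s powr nu d n) \<longlongrightarrow>
         2 * real (d 1) * (real (d n) - 1) / ((real (d 1) - 1) * real (d n))) (at_right 0)
    \<and> ((\<lambda>s. (Z s - 1) / s powr nu d n) \<longlongrightarrow> 0) (at_right 0)
    \<and> ((\<lambda>s. W s / s powr nu d n) \<longlongrightarrow> (real (d n) - 1) / real (d n)) (at_right 0)"
proof -
  interpret S: stp n d using assms by unfold_locales auto
  define \<alpha> where "\<alpha> s = S.PP s 1" for s
  define \<beta> where "\<beta> s = S.SS s 1" for s
  define \<gamma> where "\<gamma> s = real (d 1) * real (d n) * S.tt s ^ (d n - 1) * S.PP s (S.tt s)" for s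
  define \<delta> where "\<delta> s = S.tt s * S.SS s (S.tt s)" for s
  have hd: "((\<lambda>s. \<delta> s / S.tt s) \<longlongrightarrow> 0) (at_right 0)"
  proof -
    have "eventually (\<lambda>s. S.SS s (S.tt s) = \<delta> s / S.tt s) (at_right 0)"
      using S.ttne by eventually_elim (simp add: \<delta>_def)
    from Lim_transform_eventually[OF S.G4 this] show ?thesis .
  qed
  have A: "alg (d 1) (d n) (at_right 0) S.tt \<alpha> \<beta> \<gamma> \<delta>"
    by unfold_locales
      (use S.d1 S.dn S.tt0 S.ttpos S.G1 S.G2 S.G3 hd in \<open>simp_all add: \<alpha>_def \<beta>_def \<gamma>_def\<close>)
  interpret a: alg "d 1" "d n" "at_right 0" S.tt \<alpha> \<beta> \<gamma> \<delta> by (rule A)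
  have c1: "a.c1 = real (d 1)" "a.cn = real (d n)" unfolding a.c1_def a.cn_def by auto
  obtain X Y Z W where ev: "eventually (\<lambda>s.
      (a.c1 - 1) * X s + Y s + Z s \<noteq> 0 \<and>
      a.N1 s / ((a.c1 - 1) * X s + Y s + Z s) + W s = 1 \<and>
      (a.N1' s * ((a.c1 - 1) * X s + Y s + Z s) - a.N1 s * ((a.c1 - 1) * X s * a.c1 + Y s))
         / ((a.c1 - 1) * X s + Y s + Z s)^2 = 1 \<and>
      (a.c1 - 1) * X s * S.tt s ^ d 1 + Y s * S.tt s + Z s \<noteq> 0 \<and>
      a.Nt s / ((a.c1 - 1) * X s * S.tt s ^ d 1 + Y s * S.tt s + Z s) + W s = S.tt s \<and>
      (a.Nt' s * ((a.c1 - 1) * X s * S.tt s ^ d 1 + Y s * S.tt s + Z s)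
         - a.Nt s * ((a.c1 - 1) * X s * (a.c1 * S.tt s ^ (d 1 - 1)) + Y s))
         / ((a.c1 - 1) * X s * S.tt s ^ d 1 + Y s * S.tt s + Z s)^2 = 1) (at_right 0)"
    and lX: "((\<lambda>s. (X s - 1)/S.tt s) \<longlongrightarrow> a.c1*(a.c1-3)*(a.cn-1)/((a.c1-1)^2*a.cn)) (at_right 0)"
    and lY: "((\<lambda>s. Y s / S.tt s) \<longlongrightarrow> 2*a.c1*(a.cn-1)/((a.c1-1)*a.cn)) (at_right 0)"
    and lZ: "((\<lambda>s. (Z s - 1)/S.tt s) \<longlongrightarrow> 0) (at_right 0)"
    and lW: "((\<lambda>s. W s / S.tt s) \<longlongrightarrow> (a.cn-1)/a.cn) (at_right 0)"
    using a.alg_main by blast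
  have ev2: "eventually (\<lambda>s. s > 0 \<and> (\<forall>i\<in>{1..n-1}. S.ff s 1 i \<noteq> 0) \<and> (\<forall>i\<in>{1..n-1}. S.ff s (S.tt s) i \<noteq> 0)
     \<and> S.tt s > 0) (at_right 0)"
    using S.spos S.ev_ff1 S.ev_fft S.ttpos
  proof eventually_elim
    case (elim s)
    have 1: "\<forall>i\<in>{1..n-1}. S.ff s 1 i \<noteq> 0" using elim(2) unfolding S.ff_def by fastforce
    have 2: "\<forall>i\<in>{1..n-1}. S.ff s (S.tt s) i \<noteq> 0"
    proof
      fix i assume i: "i \<in> {1..n-1}"
      have bp: "bval d n s i > 0" using S.b_pos[OF elim(1)] i by simp
      have "(S.tt s / bval d n s i) ^ S.DD i < 1" using elim(3) i by blast
      then have "S.tt s ^ S.DD i < bval d n s i ^ S.DD i" using bp by (simp add: power_divide)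
      then show "S.ff s (S.tt s) i \<noteq> 0" unfolding S.ff_def by simp
    qed
    show ?case using elim 1 2 by blast
  qed
  obtain s0 where s0: "s0 > 0" and H: "\<And>s. 0 < s \<Longrightarrow> s < s0 \<Longrightarrow>
      ((a.c1 - 1) * X s + Y s + Z s \<noteq> 0 \<and>
      a.N1 s / ((a.c1 - 1) * X s + Y s + Z s) + W s = 1 \<and>
      (a.N1' s * ((a.c1 - 1) * X s + Y s + Z s) - a.N1 s * ((a.c1 - 1) * X s * a.c1 + Y s))
         / ((a.c1 - 1) * X s + Y s + Z s)^2 = 1 \<and>
      (a.c1 - 1) * X s * S.tt s ^ d 1 + Y s * S.tt s + Z s \<noteq> 0 \<and>
      a.Nt s / ((a.c1 - 1) * X s * S.tt s ^ d 1 + Y s * S.tt s + Z s) + W s = S.tt s \<and>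
      (a.Nt' s * ((a.c1 - 1) * X s * S.tt s ^ d 1 + Y s * S.tt s + Z s)
         - a.Nt s * ((a.c1 - 1) * X s * (a.c1 * S.tt s ^ (d 1 - 1)) + Y s))
         / ((a.c1 - 1) * X s * S.tt s ^ d 1 + Y s * S.tt s + Z s)^2 = 1)
      \<and> (s > 0 \<and> (\<forall>i\<in>{1..n-1}. S.ff s 1 i \<noteq> 0) \<and> (\<forall>i\<in>{1..n-1}. S.ff s (S.tt s) i \<noteq> 0)
     \<and> S.tt s > 0)"
  proof -
    have "eventually (\<lambda>s. ((a.c1 - 1) * X s + Y s + Z s \<noteq> 0 \<and>
      a.N1 s / ((a.c1 - 1) * X s + Y s + Z s) + W s = 1 \<and>
      (a.N1' s * ((a.c1 - 1) * X s + Y s + Z s) - a.N1 s * ((a.c1 - 1) * X s * a.c1 + Y s))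
         / ((a.c1 - 1) * X s + Y s + Z s)^2 = 1 \<and>
      (a.c1 - 1) * X s * S.tt s ^ d 1 + Y s * S.tt s + Z s \<noteq> 0 \<and>
      a.Nt s / ((a.c1 - 1) * X s * S.tt s ^ d 1 + Y s * S.tt s + Z s) + W s = S.tt s \<and>
      (a.Nt' s * ((a.c1 - 1) * X s * S.tt s ^ d 1 + Y s * S.tt s + Z s)
         - a.Nt s * ((a.c1 - 1) * X s * (a.c1 * S.tt s ^ (d 1 - 1)) + Y s))
         / ((a.c1 - 1) * X s * S.tt s ^ d 1 + Y s * S.tt s + Z s)^2 = 1)
      \<and> (s > 0 \<and> (\<forall>i\<in>{1..n-1}. S.ff s 1 i \<noteq> 0) \<and> (\<forall>i\<in>{1..n-1}. S.ff s (S.tt s) i \<noteq> 0)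
     \<and> S.tt s > 0)) (at_right 0)"
      using eventually_conj[OF ev ev2] .
    then show ?thesis unfolding eventually_at_right_field using that by blast
  qed
  have tt_eq: "S.tt s = s powr nu d n" for s unfolding S.tt_def S.nu'_def ..
  have main: "Qn d n s (X s) (Y s) (Z s) (W s) 1 = 1
      \<and> (Qn d n s (X s) (Y s) (Z s) (W s) has_real_derivative 1) (at 1)
      \<and> Qn d n s (X s) (Y s) (Z s) (W s) (s powr nu d n) = s powr nu d n
      \<and> (Qn d n s (X s) (Y s) (Z s) (W s) has_real_derivative 1) (at (s powr nu d n))"
    if s: "0 < s" "s < s0" for s
  proof -
    note h = H[OF s]
    define t where "t = S.tt s"
    have tp: "t > 0" using h unfolding t_def by simp
    define D1 where "D1 = (real (d 1) - 1) * X s + Y s + Z s"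
    define Dt where "Dt = (real (d 1) - 1) * X s * t ^ d 1 + Y s * t + Z s"
    have D1nz: "D1 \<noteq> 0" using h unfolding D1_def c1 by simp
    have Dtnz: "Dt \<noteq> 0" using h unfolding Dt_def c1 t_def by simp
    have N1: "a.N1 s = real (d 1) * S.PP s 1" unfolding a.N1_def c1 \<alpha>_def ..
    have N1': "a.N1' s = real (d 1) * real (d n) * S.PP s 1 + real (d 1) * (S.PP s 1 * S.SS s 1)"
      unfolding a.N1'_def c1 \<alpha>_def \<beta>_def by (simp add: algebra_simps)
    have dn1: "d n = Suc (d n - 1)" using S.dn by simp
    have tpow: "t ^ d n = t ^ (d n - 1) * t" using dn1 by (metis power_Suc2)
    have Nt: "a.Nt s = real (d 1) * t ^ d n * S.PP s t"
      unfolding a.Nt_def c1 \<gamma>_def t_def[symmetric] tpow using S.dn by simp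
    have Nt': "a.Nt' s = real (d 1) * real (d n) * t ^ (d n - 1) * S.PP s t + real (d 1) * t ^ d n * (S.PP s t * S.SS s t)"
      unfolding a.Nt'_def c1 \<gamma>_def \<delta>_def t_def[symmetric] tpow using S.dn by (simp add: field_simps)
    have q1: "Qn d n s (X s) (Y s) (Z s) (W s) 1 = a.N1 s / D1 + W s"
      unfolding S.Q_eq N1 D1_def by simp
    have e1: "Qn d n s (X s) (Y s) (Z s) (W s) 1 = 1" using h unfolding q1 D1_def c1 by simp
    have den1: "(real (d 1) - 1) * X s * 1 ^ d 1 + Y s * 1 + Z s \<noteq> 0" using D1nz unfolding D1_def by simp
    have d1': "(Qn d n s (X s) (Y s) (Z s) (W s) has_real_derivative
        (a.N1' s * D1 - a.N1 s * ((real (d 1) - 1) * X s * real (d 1) + Y s)) / D1^2) (at 1)"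
      using S.Q_deriv[of s 1 "X s" "Y s" "Z s" "W s", OF _ den1] h unfolding N1 N1' D1_def by simp
    have v1: "(a.N1' s * D1 - a.N1 s * ((real (d 1) - 1) * X s * real (d 1) + Y s)) / D1^2 = 1"
      using h unfolding D1_def c1 by blast
    have e2: "(Qn d n s (X s) (Y s) (Z s) (W s) has_real_derivative 1) (at 1)"
      using d1' unfolding v1 .
    have qt: "Qn d n s (X s) (Y s) (Z s) (W s) t = a.Nt s / Dt + W s"
      unfolding S.Q_eq Nt Dt_def by simp
    have vq: "a.Nt s / Dt + W s = t" using h unfolding Dt_def c1 t_def by blast
    have e3: "Qn d n s (X s) (Y s) (Z s) (W s) t = t" unfolding qt vq ..
    have dt': "(Qn d n s (X s) (Y s) (Z s) (W s) has_real_derivative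
        (a.Nt' s * Dt - a.Nt s * ((real (d 1) - 1) * X s * (real (d 1) * t ^ (d 1 - 1)) + Y s)) / Dt^2) (at t)"
      using S.Q_deriv[of s t "X s" "Y s" "Z s" "W s"] h Dtnz unfolding Nt Nt' Dt_def t_def by simp
    have vt: "(a.Nt' s * Dt - a.Nt s * ((real (d 1) - 1) * X s * (real (d 1) * t ^ (d 1 - 1)) + Y s)) / Dt^2 = 1"
      using h unfolding Dt_def c1 t_def by blast
    have e4: "(Qn d n s (X s) (Y s) (Z s) (W s) has_real_derivative 1) (at t)"
      using dt' unfolding vt .
    show ?thesis using e1 e2 e3 e4 unfolding t_def tt_eq by blast
  qed
  show ?thesis
    apply (rule exI[of _ s0])
    apply (rule conjI[OF s0])
    apply (rule exI[of _ X])
    apply (rule exI[of _ Y])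
    apply (rule exI[of _ Z])
    apply (rule exI[of _ W])
    using main lX lY lZ lW unfolding c1 tt_eq by blast
qed

end
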